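(* Let $G$ be a connected $m$-uniform hypergraph with path cover number $\mathrm{pc}(G)$. Then $s(G)\le m^{\mathrm{pc}(G)-1}$ and $\gamma(G)\le(\mathrm{pc}(G)-1)\mathrm{cl}(m)$.
   Context: Paths: a walk $v_1,e_1,\dots,v_l,e_l,v_{l+1}$ ($\{v_i,v_{i+1}\}\subseteq e_i$) is a path if its vertices and edges are distinct and $v_i\notin\bigcup_{j>i}e_j$ for $i\le l-1$; it covers $v_1,\dots,v_{l+1}$; a single vertex is a trivial path. Paths are disjoint if no edge of one contains a vertex covered by the other. A path cover is a set of pairwise disjoint paths covering all vertices; $\mathrm{pc}(G)$ is the minimum cardinality of a path cover. Adjacency tensor $\mathcal{A}(G)$ (vertices $v_1,\dots,v_n$): $a_{i_1\cdots i_m}=\frac1{(m-1)!}$ if $\{v_{i_1},\dots,v_{i_m}\}$ is an edge, else $0$. For a tensor $\mathcal{A}$: eigenvectors $\mathcal{A}x^{m-1}=\lambda x^{[m-1]}$, $x\ne0$, $(\mathcal{A}x^{m-1})_i=\sum a_{ii_2\cdots i_m}x_{i_2}\cdots x_{i_m}$; $\rho(\mathcal{A})$ spectral radius. Stabilizing index $s(\mathcal{A})$: number of invertible diagonal $D$ with $d_{11}=1$ and $\mathcal{A}=D^{-(m-1)}\mathcal{A}D$, $(D^{-(m-1)}\mathcal{A}D)_{i_1\cdots i_m}=d_{i_1}^{-(m-1)}a_{i_1\cdots i_m}d_{i_2}\cdots d_{i_m}$. Stabilizing dimension $\gamma(\mathcal{A})$: composition length of the $\mathbb{Z}_m$-module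 of eigenvectors $y$ for $\rho(\mathcal{A})$ normalized by $y_1=1$, with operation $y\circ\hat y=D_yD_{\hat y}v_p$, $D_y=\mathrm{diag}(y_i/|y_i|)$, $v_p$ the positive one. $s(G)=s(\mathcal{A}(G))$, $\gamma(G)=\gamma(\mathcal{A}(G))$. $\mathrm{cl}(m)$: number of prime factors of $m$ with multiplicity. *)

theory Defs
  imports Complex_Main "HOL-Library.Extended_Nat" "HOL-Computational_Algebra.Primes"
begin

text \<open>A hypergraph G has vertex set {0..<n} (vertex v_(i+1) of the paper is the
  natural number i) and edge set E, a set of vertex sets.\<close>

definition uniform_hypergraph :: "nat \<Rightarrow> nat \<Rightarrow> nat set set \<Rightarrow> bool" where
  "uniform_hypergraph m n E \<longleftrightarrow> (\<forall>e\<in>E. e \<subseteq> {..<n} \<and> card e = m)"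

definition hg_connected :: "nat \<Rightarrow> nat set set \<Rightarrow> bool" where
  "hg_connected n E \<longleftrightarrow>
     (\<forall>u<n. \<forall>v<n. (u, v) \<in> {(a, b). \<exists>e\<in>E. a \<in> e \<and> b \<in> e}\<^sup>*)"

text \<open>A path v_1,e_1,...,v_l,e_l,v_(l+1) is represented by the vertex list vs
  (length l+1) and the edge list es (length l); indices are 0-based.\<close>

definition is_path :: "nat \<Rightarrow> nat set set \<Rightarrow> nat list \<times> nat set list \<Rightarrow> bool" where
  "is_path n E P \<longleftrightarrow>
     (let vs = fst P; es = snd P in
        length vs = length es + 1 \<and>
        set vs \<subseteq> {..<n} \<and> set es \<subseteq> E \<and>
        (\<forall>i < length es. vs ! i \<in> es ! i \<and> vs ! (i + 1) \<in> es ! i) \<and>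
        distinct vs \<and> distinct es \<and>
        (\<forall>i j. i < j \<and> j < length es \<longrightarrow> vs ! i \<notin> es ! j))"

definition covered :: "nat list \<times> nat set list \<Rightarrow> nat set" where
  "covered P = set (fst P)"

definition paths_disjoint :: "nat list \<times> nat set list \<Rightarrow> nat list \<times> nat set list \<Rightarrow> bool" where
  "paths_disjoint P Q \<longleftrightarrow>
     (\<forall>e\<in>set (snd P). \<forall>v\<in>covered Q. v \<notin> e) \<and>
     (\<forall>e\<in>set (snd Q). \<forall>v\<in>covered P. v \<notin> e)"

definition path_cover :: "nat \<Rightarrow> nat set set \<Rightarrow> (nat list \<times> nat set list) set \<Rightarrow> bool" where
  "path_cover n E C \<longleftrightarrow>
     (\<forall>P\<in>C. is_path n E P) \<and>
     (\<forall>P\<in>C. \<forall>Q\<in>C. P \<noteq> Q \<longrightarrow> paths_disjoint P Q) \<and>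
     (\<Union>P\<in>C. covered P) = {..<n}"

definition pc :: "nat \<Rightarrow> nat set set \<Rightarrow> nat" where
  "pc n E = (LEAST k. \<exists>C. path_cover n E C \<and> card C = k)"

text \<open>A tensor is a function from index lists (i_1,...,i_m), each i_k < n, to complex
  numbers; vectors are functions nat \<Rightarrow> complex vanishing outside {..<n}.\<close>

type_synonym tensor = "nat list \<Rightarrow> complex"

definition index_lists :: "nat \<Rightarrow> nat \<Rightarrow> nat list set" where
  "index_lists k n = {is. length is = k \<and> set is \<subseteq> {..<n}}"

definition tensor_apply :: "nat \<Rightarrow> nat \<Rightarrow> tensor \<Rightarrow> (nat \<Rightarrow> complex) \<Rightarrow> nat \<Rightarrow> complex" where
  "tensor_apply m n A x i = (\<Sum>is\<in>index_lists (m - 1) n. A (i # is) * prod_list (map x is))"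

definition is_eigenpair :: "nat \<Rightarrow> nat \<Rightarrow> tensor \<Rightarrow> complex \<Rightarrow> (nat \<Rightarrow> complex) \<Rightarrow> bool" where
  "is_eigenpair m n A lam x \<longleftrightarrow>
     (\<forall>i. n \<le> i \<longrightarrow> x i = 0) \<and> (\<exists>i<n. x i \<noteq> 0) \<and>
     (\<forall>i<n. tensor_apply m n A x i = lam * x i ^ (m - 1))"

definition spectral_radius :: "nat \<Rightarrow> nat \<Rightarrow> tensor \<Rightarrow> real" where
  "spectral_radius m n A = Sup {cmod lam | lam. \<exists>x. is_eigenpair m n A lam x}"

text \<open>Stabilizing index: invertible diagonal matrices D = diag(d_0,...,d_(n-1)) with
  d_0 = 1 and D^(-(m-1)) A D = A (represented by d, with d i = 1 for i \<ge> n).\<close>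

definition stab_diagonals :: "nat \<Rightarrow> nat \<Rightarrow> tensor \<Rightarrow> (nat \<Rightarrow> complex) set" where
  "stab_diagonals m n A =
     {d. (\<forall>i<n. d i \<noteq> 0) \<and> (\<forall>i. n \<le> i \<longrightarrow> d i = 1) \<and> d 0 = 1 \<and>
         (\<forall>i js. i < n \<and> js \<in> index_lists (m - 1) n \<longrightarrow>
            inverse (d i ^ (m - 1)) * A (i # js) * prod_list (map d js) = A (i # js))}"

definition stab_index :: "nat \<Rightarrow> nat \<Rightarrow> tensor \<Rightarrow> enat" where
  "stab_index m n A =
     (if finite (stab_diagonals m n A) then enat (card (stab_diagonals m n A)) else \<infinity>)"

definition rho_eigvecs :: "nat \<Rightarrow> nat \<Rightarrow> tensor \<Rightarrow> (nat \<Rightarrow> complex) set" where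
  "rho_eigvecs m n A =
     {y. is_eigenpair m n A (complex_of_real (spectral_radius m n A)) y \<and> y 0 = 1}"

definition pos_eigvec :: "nat \<Rightarrow> nat \<Rightarrow> tensor \<Rightarrow> nat \<Rightarrow> complex" where
  "pos_eigvec m n A =
     (THE y. y \<in> rho_eigvecs m n A \<and> (\<forall>i<n. y i \<in> \<real> \<and> 0 < Re (y i)))"

definition eig_op :: "nat \<Rightarrow> nat \<Rightarrow> tensor \<Rightarrow> (nat \<Rightarrow> complex) \<Rightarrow> (nat \<Rightarrow> complex) \<Rightarrow> nat \<Rightarrow> complex" where
  "eig_op m n A y y' = (\<lambda>i. if i < n then
      (y i / complex_of_real (cmod (y i))) * (y' i / complex_of_real (cmod (y' i)))
        * pos_eigvec m n A i
     else 0)"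

text \<open>Z_m-submodules of the module (rho_eigvecs, \<circ>) with zero element v_p: subsets
  containing v_p and closed under \<circ> (the Z_m-scalar action k\<cdot>y is the k-fold \<circ>-power).\<close>

definition eig_submodule :: "nat \<Rightarrow> nat \<Rightarrow> tensor \<Rightarrow> (nat \<Rightarrow> complex) set \<Rightarrow> bool" where
  "eig_submodule m n A H \<longleftrightarrow>
     H \<subseteq> rho_eigvecs m n A \<and> pos_eigvec m n A \<in> H \<and>
     (\<forall>y\<in>H. \<forall>y'\<in>H. eig_op m n A y y' \<in> H) \<and>
     (\<forall>y\<in>H. \<forall>k::nat. ((\<lambda>z. eig_op m n A y z) ^^ k) (pos_eigvec m n A) \<in> H)"

text \<open>Composition length = supremum of lengths of strictly increasing chains
  H_0 \<subset> H_1 \<subset> ... \<subset> H_k of submodules.\<close>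

definition stab_dim :: "nat \<Rightarrow> nat \<Rightarrow> tensor \<Rightarrow> enat" where
  "stab_dim m n A =
     Sup {enat k | k. \<exists>Hs. length Hs = k + 1 \<and> (\<forall>H\<in>set Hs. eig_submodule m n A H) \<and>
                         (\<forall>i<k. Hs ! i \<subset> Hs ! (i + 1))}"

definition adj_tensor :: "nat \<Rightarrow> nat set set \<Rightarrow> tensor" where
  "adj_tensor m E = (\<lambda>is. if set is \<in> E then 1 / of_nat (fact (m - 1)) else 0)"

definition cl :: "nat \<Rightarrow> nat" where
  "cl m = size (prime_factorization m)"

end

theory Submission
  imports Defs "HOL-Analysis.Analysis" "HOL-Algebra.Coset" "HOL-Combinatorics.Multiset_Permutations"
begin

lemma uniform_finite_E:
  assumes "uniform_hypergraph m n E" shows "finite E"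
proof -
  have "E \<subseteq> Pow {..<n}" using assms unfolding uniform_hypergraph_def by auto
  then show ?thesis by (rule finite_subset) auto
qed

lemma uniform_edge:
  assumes "uniform_hypergraph m n E" "e \<in> E" shows "e \<subseteq> {..<n}" "card e = m" "finite e"
  using assms unfolding uniform_hypergraph_def by (auto intro: finite_subset)

lemma tensor_apply_adj:
  fixes x :: "nat \<Rightarrow> complex"
  assumes U: "uniform_hypergraph m n E" and m: "2 \<le> m" and i: "i < n"
  shows "tensor_apply m n (adj_tensor m E) x i = (\<Sum>e\<in>{e\<in>E. i \<in> e}. \<Prod>j\<in>e-{i}. x j)"
proof -
  define c :: complex where "c = 1 / of_nat (fact (m - 1))"
  define J where "J = {js \<in> index_lists (m-1) n. set (i#js) \<in> E}"
  have finE: "finite E" using U by (rule uniform_finite_E)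
  have finI: "finite (index_lists (m-1) n)"
    unfolding index_lists_def using finite_lists_length_eq[of "{..<n}" "m-1"]
    by (simp add: conj_commute)
  have finJ: "finite J" using finI unfolding J_def by auto
  have dist: "distinct (i#js)" if "js \<in> J" for js
  proof -
    have "set (i#js) \<in> E" "length js = m - 1" using that unfolding J_def index_lists_def by auto
    then have "card (set (i#js)) = length (i#js)" using uniform_edge[OF U] m by auto
    then show ?thesis by (rule card_distinct)
  qed
  have "tensor_apply m n (adj_tensor m E) x i
      = (\<Sum>js\<in>index_lists (m-1) n. (if set (i#js) \<in> E then c * prod_list (map x js) else 0))"
    unfolding tensor_apply_def adj_tensor_def c_def by (intro sum.cong) auto
  also have "\<dots> = (\<Sum>js\<in>J. c * prod_list (map x js))"
    unfolding J_def using finI by (simp add: sum.inter_filter[symmetric])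
  also have "\<dots> = (\<Sum>js\<in>J. c * (\<Prod>j\<in>set (i#js) - {i}. x j))"
  proof (intro sum.cong refl)
    fix js assume "js \<in> J"
    with dist have "distinct js" "i \<notin> set js" by auto
    then have "set (i#js) - {i} = set js" by auto
    then show "c * prod_list (map x js) = c * (\<Prod>j\<in>set (i#js) - {i}. x j)"
      using \<open>distinct js\<close> by (simp add: prod.distinct_set_conv_list)
  qed
  also have "\<dots> = (\<Sum>e\<in>{e\<in>E. i \<in> e}. \<Sum>js\<in>{js\<in>J. set (i#js) = e}. c * (\<Prod>j\<in>set (i#js) - {i}. x j))"
    by (rule sum.group[symmetric]) (use finJ finE in \<open>auto simp: J_def\<close>)
  also have "\<dots> = (\<Sum>e\<in>{e\<in>E. i \<in> e}. \<Prod>j\<in>e-{i}. x j)"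
  proof (intro sum.cong refl)
    fix e assume e: "e \<in> {e\<in>E. i \<in> e}"
    have fe: "finite e" "card e = m" "e \<subseteq> {..<n}" using uniform_edge[OF U] e by auto
    have eq: "{js\<in>J. set (i#js) = e} = permutations_of_set (e - {i})"
    proof (rule Set.set_eqI, rule iffI)
      fix js assume js: "js \<in> {js\<in>J. set (i#js) = e}"
      with dist have "distinct js" "i \<notin> set js" by auto
      with js show "js \<in> permutations_of_set (e - {i})"
        unfolding permutations_of_set_def by auto
    next
      fix js assume js: "js \<in> permutations_of_set (e - {i})"
      then have s: "set js = e - {i}" "distinct js" unfolding permutations_of_set_def by auto
      then have "length js = m - 1" using fe e by (metis distinct_card card_Diff_singleton mem_Collect_eq)
      moreover have "set (i#js) = e" using s e by auto
      ultimately show "js \<in> {js\<in>J. set (i#js) = e}"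
        using s fe e unfolding J_def index_lists_def by auto
    qed
    have "(\<Sum>js\<in>{js\<in>J. set (i#js) = e}. c * (\<Prod>j\<in>set (i#js) - {i}. x j))
        = (\<Sum>js\<in>{js\<in>J. set (i#js) = e}. c * (\<Prod>j\<in>e - {i}. x j))"
      by (intro sum.cong) auto
    also have "\<dots> = of_nat (fact (m-1)) * (c * (\<Prod>j\<in>e - {i}. x j))"
      using eq fe e by (simp add: card_Diff_singleton)
    also have "\<dots> = (\<Prod>j\<in>e - {i}. x j)" unfolding c_def by simp
    finally show "(\<Sum>js\<in>{js\<in>J. set (i#js) = e}. c * (\<Prod>j\<in>set (i#js) - {i}. x j)) = (\<Prod>j\<in>e-{i}. x j)" .
  qed
  finally show ?thesis .
qed


locale HG =
  fixes m n :: nat and E :: "nat set set"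
  assumes m2: "2 \<le> m" and n0: "0 < n" and U: "uniform_hypergraph m n E"
    and conn: "hg_connected n E"
begin

lemma finE: "finite E" using U by (rule uniform_finite_E)
lemma edge_sub: "e \<in> E \<Longrightarrow> e \<subseteq> {..<n}" using uniform_edge[OF U] by blast
lemma edge_card: "e \<in> E \<Longrightarrow> card e = m" using uniform_edge[OF U] by blast
lemma edge_fin: "e \<in> E \<Longrightarrow> finite e" using uniform_edge[OF U] by blast

lemma connected_induct:
  assumes "P 0" and "\<And>a b e. a \<in> e \<Longrightarrow> b \<in> e \<Longrightarrow> e \<in> E \<Longrightarrow> P a \<Longrightarrow> P b" and "v < n"
  shows "P v"
proof -
  have "(0, v) \<in> {(a, b). \<exists>e\<in>E. a \<in> e \<and> b \<in> e}\<^sup>*"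
    using conn n0 assms(3) unfolding hg_connected_def by blast
  then show ?thesis
  proof (induction rule: rtrancl_induct)
    case base then show ?case using assms(1) .
  next
    case (step y z) then show ?case using assms(2) by blast
  qed
qed

lemma connected_induct_from:
  assumes "u < n" "P u" and "\<And>a b e. a \<in> e \<Longrightarrow> b \<in> e \<Longrightarrow> e \<in> E \<Longrightarrow> P a \<Longrightarrow> P b" and "v < n"
  shows "P v"
proof -
  have "(u, v) \<in> {(a, b). \<exists>e\<in>E. a \<in> e \<and> b \<in> e}\<^sup>*"
    using conn assms(1,4) unfolding hg_connected_def by blast
  then show ?thesis
  proof (induction rule: rtrancl_induct)
    case base then show ?case using assms(2) .
  next
    case (step y z) then show ?case using assms(3) by blast
  qed
qed

definition goodE :: "(nat \<Rightarrow> complex) \<Rightarrow> bool" where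
  "goodE d \<longleftrightarrow> (\<forall>i<n. d i \<noteq> 0) \<and> d 0 = 1 \<and> (\<forall>e\<in>E. \<forall>i\<in>e. (\<Prod>j\<in>e-{i}. d j) = d i ^ (m-1))"

definition good1 :: "(nat \<Rightarrow> complex) \<Rightarrow> bool" where
  "good1 d \<longleftrightarrow> (\<forall>i<n. d i ^ m = 1) \<and> d 0 = 1 \<and> (\<forall>e\<in>E. (\<Prod>j\<in>e. d j) = 1)"

lemma goodE_good1:
  assumes "goodE d" shows "good1 d"
proof -
  have ed: "(\<Prod>j\<in>e. d j) = d i ^ m" if "e \<in> E" "i \<in> e" for e i
  proof -
    have "(\<Prod>j\<in>e. d j) = d i * (\<Prod>j\<in>e-{i}. d j)"
      using that edge_fin by (simp add: prod.remove)
    also have "\<dots> = d i * d i ^ (m - 1)" using assms that unfolding goodE_def by simp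
    also have "\<dots> = d i ^ m" using m2 by (simp add: power_eq_if)
    finally show ?thesis .
  qed
  have pw: "d v ^ m = 1" if "v < n" for v
  proof -
    have "d v ^ m = d 0 ^ m"
    proof (rule connected_induct[OF _ _ that])
      fix a b e assume "a \<in> e" "b \<in> e" "e \<in> E" "d a ^ m = d 0 ^ m"
      then show "d b ^ m = d 0 ^ m" using ed by metis
    qed simp
    then show ?thesis using assms unfolding goodE_def by simp
  qed
  have "(\<Prod>j\<in>e. d j) = 1" if "e \<in> E" for e
  proof -
    have "card e = m" using edge_card that .
    then have "e \<noteq> {}" using m2 by auto
    then obtain i where "i \<in> e" by auto
    then show ?thesis using ed[OF that] pw edge_sub[OF that] by auto
  qed
  then show ?thesis using pw assms unfolding good1_def goodE_def by auto
qed

lemma stab_goodE: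
  assumes "d \<in> stab_diagonals m n (adj_tensor m E)" shows "goodE d"
proof -
  have nz: "\<forall>i<n. d i \<noteq> 0" and d0: "d 0 = 1" using assms unfolding stab_diagonals_def by auto
  have "(\<Prod>j\<in>e-{i}. d j) = d i ^ (m-1)" if e: "e \<in> E" "i \<in> e" for e i
  proof -
    define js where "js = sorted_list_of_set (e - {i})"
    have fe: "finite e" "card e = m" "e \<subseteq> {..<n}" using e edge_fin edge_card edge_sub by auto
    have sj: "set js = e - {i}" "distinct js" using fe unfolding js_def by auto
    have lj: "length js = m - 1" using sj fe e by (metis distinct_card card_Diff_singleton)
    have jsI: "js \<in> index_lists (m - 1) n" using sj lj fe unfolding index_lists_def by auto
    have "i < n" using fe e by auto
    have "set (i#js) = e" using sj e by auto
    then have A: "adj_tensor m E (i # js) = 1 / of_nat (fact (m - 1))"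
      using e unfolding adj_tensor_def by simp
    have "inverse (d i ^ (m - 1)) * adj_tensor m E (i # js) * prod_list (map d js) = adj_tensor m E (i # js)"
      using assms jsI \<open>i < n\<close> unfolding stab_diagonals_def by blast
    then have "inverse (d i ^ (m - 1)) * prod_list (map d js) = 1"
      unfolding A by (simp add: field_simps)
    then have "prod_list (map d js) = d i ^ (m-1)"
      using nz \<open>i < n\<close> by (simp add: field_simps)
    then show ?thesis using sj by (metis prod.distinct_set_conv_list)
  qed
  then show ?thesis using nz d0 unfolding goodE_def by auto
qed

lemma pc_path: "path_cover n E C \<Longrightarrow> P \<in> C \<Longrightarrow> is_path n E P"
  unfolding path_cover_def by auto

lemma pc_edges_in:
  assumes PC: "path_cover n E C" and P: "P \<in> C" and e: "e \<in> set (snd P)"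
  shows "e \<subseteq> set (fst P)"
proof
  fix v assume v: "v \<in> e"
  have "e \<in> E" using pc_path[OF PC P] e unfolding is_path_def Let_def by auto
  then have "v < n" using v edge_sub by auto
  then have "v \<in> (\<Union>P\<in>C. covered P)" using PC unfolding path_cover_def by auto
  then obtain Q where Q: "Q \<in> C" "v \<in> covered Q" by blast
  show "v \<in> set (fst P)"
  proof (cases "Q = P")
    case True then show ?thesis using Q unfolding covered_def by simp
  next
    case False
    then have "paths_disjoint P Q" using PC P Q unfolding path_cover_def by auto
    then show ?thesis using e v Q unfolding paths_disjoint_def by auto
  qed
qed

lemma pc_Det:
  fixes g :: "nat \<Rightarrow> complex"
  assumes PC: "path_cover n E C" and P: "P \<in> C" and c: "c \<noteq> 0"
    and ed: "\<forall>e\<in>set (snd P). prod g e = c ^ m" and lst: "g (last (fst P)) = c"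
  shows "\<forall>v\<in>set (fst P). g v = c"
proof -
  obtain vs es where Pe: "P = (vs, es)" by (cases P)
  have ip: "is_path n E (vs, es)" using pc_path[OF PC P] Pe by simp
  then have len: "length vs = length es + 1" and esE: "set es \<subseteq> E"
    and inn: "\<forall>i < length es. vs ! i \<in> es ! i \<and> vs ! (i + 1) \<in> es ! i"
    and dvs: "distinct vs"
    and later: "\<forall>i j. i < j \<and> j < length es \<longrightarrow> vs ! i \<notin> es ! j"
    unfolding is_path_def Let_def by auto
  have esin: "e \<subseteq> set vs" if "e \<in> set es" for e using pc_edges_in[OF PC P] that Pe by auto
  define l where "l = length es"
  have key: "\<forall>i. j \<le> i \<and> i \<le> l \<longrightarrow> g (vs ! i) = c" if "j \<le> l" for j
    using that
  proof (induction j rule: inc_induct)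
    case base
    have "vs \<noteq> []" using len by auto
    then have "last vs = vs ! l" using len unfolding l_def by (simp add: last_conv_nth)
    then show ?case using lst Pe by auto
  next
    case (step j)
    have jl: "j < length es" using step unfolding l_def by simp
    define e where "e = es ! j"
    have eE: "e \<in> set es" unfolding e_def using jl by simp
    then have ecard: "card e = m" and efin: "finite e" using esE edge_card edge_fin by auto
    have vj: "vs ! j \<in> e" using inn jl unfolding e_def by auto
    have rest: "g v = c" if v: "v \<in> e - {vs ! j}" for v
    proof -
      have "v \<in> set vs" using esin[OF eE] v by auto
      then obtain k where k: "k < length vs" "vs ! k = v" by (auto simp: in_set_conv_nth)
      have "\<not> k < j" using later jl k v unfolding e_def by auto
      moreover have "k \<noteq> j" using k v by auto
      ultimately have "Suc j \<le> k" "k \<le> l" using k len unfolding l_def by auto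
      then show ?thesis using step.IH k by auto
    qed
    have "prod g e = g (vs ! j) * prod g (e - {vs ! j})"
      using efin vj by (simp add: prod.remove)
    also have "prod g (e - {vs ! j}) = c ^ (m - 1)"
      using rest ecard efin vj by (simp add: card_Diff_singleton)
    finally have "g (vs ! j) * c ^ (m - 1) = c ^ m" using ed eE Pe by auto
    also have "c ^ m = c * c ^ (m - 1)" using m2 by (simp add: power_eq_if)
    finally have "g (vs ! j) = c" using c by simp
    then show ?case using step.IH by (metis le_antisym not_less_eq_eq)
  qed
  show ?thesis
  proof
    fix v assume "v \<in> set (fst P)"
    then obtain i where "i < length vs" "vs ! i = v" using Pe by (auto simp: in_set_conv_nth)
    then show "g v = c" using key[of 0] len unfolding l_def by auto
  qed
qed

lemma pc_finite:
  assumes PC: "path_cover n E C" shows "finite C"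
proof -
  have "inj_on covered C"
  proof
    fix P Q assume PQ: "P \<in> C" "Q \<in> C" "covered P = covered Q"
    show "P = Q"
    proof (rule ccontr)
      assume ne: "P \<noteq> Q"
      then have dj: "paths_disjoint P Q" using PC PQ unfolding path_cover_def by auto
      obtain vs es where Pe: "P = (vs, es)" by (cases P)
      obtain ws fs where Qe: "Q = (ws, fs)" by (cases Q)
      have ip: "is_path n E (vs, es)" "is_path n E (ws, fs)" using pc_path[OF PC] PQ Pe Qe by auto
      show False
      proof (cases "es = []")
        case False
        then have "vs ! 0 \<in> es ! 0" using ip(1) unfolding is_path_def Let_def by auto
        moreover have "vs ! 0 \<in> covered Q" using PQ(3) ip(1) Pe unfolding covered_def is_path_def Let_def by auto
        moreover have "es ! 0 \<in> set es" using False by simp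
        ultimately show False using dj Pe unfolding paths_disjoint_def by auto
      next
        case esN: True
        show False
        proof (cases "fs = []")
          case False
          then have "ws ! 0 \<in> fs ! 0" using ip(2) unfolding is_path_def Let_def by auto
          moreover have "ws ! 0 \<in> covered P" using PQ(3) ip(2) Qe unfolding covered_def is_path_def Let_def by auto
          moreover have "fs ! 0 \<in> set fs" using False by simp
          ultimately show False using dj Qe unfolding paths_disjoint_def by auto
        next
          case True
          then have "length vs = 1" "length ws = 1" using ip esN unfolding is_path_def Let_def by auto
          then obtain a b where "vs = [a]" "ws = [b]"
            by (metis One_nat_def length_0_conv length_Suc_conv)
          then show False using PQ(3) ne Pe Qe True esN unfolding covered_def by auto
        qed
      qed
    qed
  qed
  moreover have "covered ` C \<subseteq> Pow {..<n}" using PC unfolding path_cover_def by auto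
  ultimately show ?thesis by (metis finite_Pow_iff finite_lessThan finite_subset inj_on_finite)
qed

definition Tset :: "(nat list \<times> nat set list) set \<Rightarrow> (nat list \<times> nat set list) \<Rightarrow> nat set" where
  "Tset C P0 = (\<lambda>P. last (fst P)) ` (C - {P0})"

lemma last_in:
  assumes "path_cover n E C" "P \<in> C" shows "last (fst P) \<in> set (fst P)" "last (fst P) < n"
proof -
  have ip: "is_path n E P" using pc_path assms by blast
  then have "fst P \<noteq> []" unfolding is_path_def Let_def by auto
  then show "last (fst P) \<in> set (fst P)" by simp
  then show "last (fst P) < n" using ip unfolding is_path_def Let_def by auto
qed

lemma Tset_sub: "path_cover n E C \<Longrightarrow> Tset C P0 \<subseteq> {..<n}"
  unfolding Tset_def using last_in by auto

lemma good1_inj: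
  assumes PC: "path_cover n E C" and P0: "P0 \<in> C" "0 \<in> set (fst P0)"
    and g: "good1 d" "good1 d'" and eqT: "\<forall>v\<in>Tset C P0. d v = d' v"
  shows "\<forall>v<n. d v = d' v"
proof -
  have nz: "d v \<noteq> 0" "d' v \<noteq> 0" if "v < n" for v
    using g that m2 unfolding good1_def by (metis one_neq_zero zero_power not_numeral_le_zero neq0_conv le_zero_eq)+
  define h where "h v = d' v / d v" for v
  have hm: "h v ^ m = 1" if "v < n" for v using g that unfolding h_def good1_def by (simp add: power_divide)
  have hnz: "h v \<noteq> 0" if "v < n" for v using nz that unfolding h_def by simp
  have he: "prod h e = 1" if "e \<in> E" for e
    using g that unfolding h_def good1_def by (simp add: prod_dividef)
  have edgesE: "e \<in> E" if "P \<in> C" "e \<in> set (snd P)" for P e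
    using pc_path[OF PC that(1)] that(2) unfolding is_path_def Let_def by auto
  have h1: "\<forall>v\<in>set (fst P). h v = 1" if "P \<in> C" "P \<noteq> P0" for P
  proof (rule pc_Det[OF PC that(1)])
    show "\<forall>e\<in>set (snd P). prod h e = 1 ^ m" using he edgesE that by simp
    have "last (fst P) \<in> Tset C P0" using that unfolding Tset_def by auto
    then show "h (last (fst P)) = 1" using eqT nz last_in[OF PC that(1)] unfolding h_def by auto
  qed simp
  define c where "c = h (last (fst P0))"
  have cn: "c ^ m = 1" "c \<noteq> 0" using hm hnz last_in[OF PC P0(1)] unfolding c_def by auto
  have "\<forall>v\<in>set (fst P0). h v = c"
    by (rule pc_Det[OF PC P0(1) cn(2)]) (use he edgesE P0 cn in \<open>auto simp: c_def\<close>)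
  then have "c = h 0" using P0 by auto
  also have "h 0 = 1" using g unfolding h_def good1_def by simp
  finally have h0: "\<forall>v\<in>set (fst P0). h v = 1" using \<open>\<forall>v\<in>set (fst P0). h v = c\<close> by simp
  show ?thesis
  proof (intro allI impI)
    fix v assume v: "v < n"
    then have "v \<in> (\<Union>P\<in>C. covered P)" using PC unfolding path_cover_def by auto
    then obtain P where P: "P \<in> C" "v \<in> covered P" by blast
    then have "h v = 1" using h1 h0 unfolding covered_def by (cases "P = P0") auto
    then show "d v = d' v" using nz[OF v] unfolding h_def by simp
  qed
qed

lemma card_Tset:
  assumes PC: "path_cover n E C" and P0: "P0 \<in> C"
  shows "finite (Tset C P0)" "card (Tset C P0) \<le> card C - 1"
proof -
  show "finite (Tset C P0)" using Tset_sub[OF PC] finite_subset by blast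
  have "card (Tset C P0) \<le> card (C - {P0})" unfolding Tset_def
    using pc_finite[OF PC] by (intro card_image_le) auto
  then show "card (Tset C P0) \<le> card C - 1" using P0 pc_finite[OF PC] by (simp add: card_Diff_singleton)
qed

end

definition Uset :: "nat \<Rightarrow> nat set \<Rightarrow> (nat \<Rightarrow> complex) set" where
  "Uset m T = {f. (\<forall>v\<in>T. f v ^ m = 1) \<and> (\<forall>v. v \<notin> T \<longrightarrow> f v = 1)}"

lemma card_Uset:
  assumes "finite T" "0 < m" shows "card (Uset m T) = m ^ card T" "finite (Uset m T)"
proof -
  define R where "R = {z::complex. z ^ m = 1}"
  have bij: "bij_betw (\<lambda>f. restrict f T) (Uset m T) (PiE T (\<lambda>_. R))"
  proof (rule bij_betwI[where g = "\<lambda>g v. if v \<in> T then g v else 1"])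
    show "(\<lambda>f. restrict f T) \<in> Uset m T \<rightarrow> PiE T (\<lambda>_. R)" unfolding Uset_def R_def by auto
    show "(\<lambda>g v. if v \<in> T then g v else 1) \<in> PiE T (\<lambda>_. R) \<rightarrow> Uset m T" unfolding Uset_def R_def by auto
    show "(\<lambda>v. if v \<in> T then restrict f T v else 1) = f" if "f \<in> Uset m T" for f
      using that unfolding Uset_def by auto
    show "restrict (\<lambda>v. if v \<in> T then g v else 1) T = g" if "g \<in> PiE T (\<lambda>_. R)" for g
      using that by (auto simp: PiE_def extensional_def restrict_def)
  qed
  have "card (PiE T (\<lambda>_. R)) = m ^ card T"
    using assms by (simp add: card_PiE R_def card_roots_unity_eq)
  then show "card (Uset m T) = m ^ card T" using bij_betw_same_card[OF bij] by simp
  have "finite (PiE T (\<lambda>_. R))" using assms by (simp add: finite_PiE R_def finite_roots_unity)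
  then show "finite (Uset m T)" using bij_betw_finite[OF bij] by simp
qed


context HG begin

definition fR :: "(nat \<Rightarrow> real) \<Rightarrow> real" where
  "fR z = (\<Sum>e\<in>E. \<Prod>j\<in>e. z j)"
definition SR :: "(nat \<Rightarrow> real) \<Rightarrow> real" where
  "SR z = (\<Sum>i<n. z i ^ m)"
definition gR :: "(nat \<Rightarrow> real) \<Rightarrow> real" where
  "gR z = fR z / SR z"
definition adm :: "(nat \<Rightarrow> real) \<Rightarrow> bool" where
  "adm z \<longleftrightarrow> (\<forall>i. 0 \<le> z i) \<and> (\<forall>i. n \<le> i \<longrightarrow> z i = 0) \<and> (\<exists>i<n. 0 < z i)"

lemma fR_homog: "fR (\<lambda>i. c * z i) = c ^ m * fR z"
proof -
  have "(\<Prod>j\<in>e. c * z j) = c ^ m * (\<Prod>j\<in>e. z j)" if "e \<in> E" for e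
    using edge_card[OF that] by (simp add: prod.distrib)
  then show ?thesis unfolding fR_def by (simp add: sum_distrib_left)
qed

lemma SR_homog: "SR (\<lambda>i. c * z i) = c ^ m * SR z"
  unfolding SR_def by (simp add: sum_distrib_left power_mult_distrib)

lemma fR_nonneg: "(\<forall>i. 0 \<le> z i) \<Longrightarrow> 0 \<le> fR z"
  unfolding fR_def by (intro sum_nonneg prod_nonneg) auto

lemma SR_pos: "adm z \<Longrightarrow> 0 < SR z"
  unfolding adm_def SR_def by (auto intro!: sum_pos2)

lemma max_point:
  "\<exists>x. adm x \<and> (\<Sum>i<n. x i) = 1 \<and> (\<forall>z. adm z \<longrightarrow> gR z \<le> gR x)"
proof -
  define X where "X = product_topology (\<lambda>_::nat. euclideanreal) UNIV"
  define Q where "Q = PiE UNIV (\<lambda>i::nat. if i < n then {0..1::real} else {0})"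
  define D where "D = Q \<inter> {x \<in> topspace X. (\<Sum>i<n. x i) \<in> {1}}"
  have cQ: "compactin X Q" unfolding X_def Q_def
    by (subst compactin_PiE) auto
  have proj: "continuous_map X euclideanreal (\<lambda>x. x i)" for i
    unfolding X_def using continuous_map_product_projection[of i UNIV "\<lambda>_. euclideanreal"] by simp
  have csum: "continuous_map X euclideanreal (\<lambda>x. \<Sum>i<n. x i)"
    by (intro continuous_map_sum proj) auto
  have cl: "closedin X {x \<in> topspace X. (\<Sum>i<n. x i) \<in> {1}}"
    by (rule closedin_continuous_map_preimage[OF csum]) auto
  have cD: "compactin X D" unfolding D_def using closed_Int_compactin[OF cl cQ] by (simp add: Int_commute)
  have topX: "topspace X = UNIV" unfolding X_def by simp
  have memD: "x \<in> D \<longleftrightarrow> (\<forall>i. 0 \<le> x i) \<and> (\<forall>i. n \<le> i \<longrightarrow> x i = 0) \<and> (\<Sum>i<n. x i) = 1" for x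
  proof
    assume "x \<in> D"
    then have a: "\<forall>i. x i \<in> (if i < n then {0..1} else {0})" "(\<Sum>i<n. x i) = 1"
      unfolding D_def Q_def by (auto simp: PiE_def Pi_def)
    have "0 \<le> x i" for i using a(1)[rule_format, of i] by (cases "i < n") auto
    moreover have "n \<le> i \<Longrightarrow> x i = 0" for i using a(1)[rule_format, of i] by auto
    ultimately show "(\<forall>i. 0 \<le> x i) \<and> (\<forall>i. n \<le> i \<longrightarrow> x i = 0) \<and> (\<Sum>i<n. x i) = 1" using a by auto
  next
    assume a: "(\<forall>i. 0 \<le> x i) \<and> (\<forall>i. n \<le> i \<longrightarrow> x i = 0) \<and> (\<Sum>i<n. x i) = 1"
    have "x i \<le> 1" if "i < n" for i
    proof -
      have "x i \<le> (\<Sum>i<n. x i)" using a that by (intro member_le_sum) auto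
      then show ?thesis using a by simp
    qed
    then show "x \<in> D" using a unfolding D_def Q_def topX by (auto simp: PiE_def Pi_def extensional_def not_less)
  qed
  have Dadm: "adm x" if "x \<in> D" for x
  proof -
    have a: "(\<forall>i. 0 \<le> x i) \<and> (\<forall>i. n \<le> i \<longrightarrow> x i = 0) \<and> (\<Sum>i<n. x i) = 1" using memD that by blast
    have "\<exists>i<n. 0 < x i"
    proof (rule ccontr)
      assume "\<not> (\<exists>i<n. 0 < x i)"
      then have "\<forall>i<n. x i = 0" using a by (metis less_eq_real_def)
      then have "(\<Sum>i<n. x i) = 0" by simp
      then show False using a by simp
    qed
    then show ?thesis using a unfolding adm_def by auto
  qed
  have cg: "continuous_map (subtopology X D) euclideanreal gR"
  proof -
    have cf: "continuous_map X euclideanreal fR" unfolding fR_def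
      by (intro continuous_map_sum continuous_map_prod proj finE) (auto intro: edge_fin)
    have cS: "continuous_map X euclideanreal SR" unfolding SR_def
      by (intro continuous_map_sum continuous_map_real_pow proj) auto
    show ?thesis unfolding gR_def
      by (intro continuous_map_real_divide continuous_map_from_subtopology cf cS)
         (use Dadm SR_pos in force)
  qed
  have "compactin euclideanreal (gR ` D)"
    by (rule image_compactin[OF _ cg]) (use cD in \<open>simp add: compactin_subtopology\<close>)
  then have cpt: "compact (gR ` D)" by simp
  define e0 :: "nat \<Rightarrow> real" where "e0 = (\<lambda>i. if i = 0 then 1 else 0)"
  have "e0 \<in> D" unfolding memD e0_def using n0 by auto
  then have "gR ` D \<noteq> {}" by auto
  from compact_attains_sup[OF cpt this] obtain x where x: "x \<in> D" "\<forall>z\<in>D. gR z \<le> gR x" by auto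
  have "gR z \<le> gR x" if z: "adm z" for z
  proof -
    define s where "s = (\<Sum>i<n. z i)"
    have zz: "\<forall>i. 0 \<le> z i" "\<forall>i. n \<le> i \<longrightarrow> z i = 0" "\<exists>i<n. 0 < z i" using z unfolding adm_def by auto
    have s: "0 < s" unfolding s_def using zz by (auto intro!: sum_pos2)
    define w where "w = (\<lambda>i. (1 / s) * z i)"
    have "w \<in> D" unfolding memD w_def using zz s
      by (auto simp: s_def sum_divide_distrib[symmetric])
    then have "gR w \<le> gR x" using x by auto
    moreover have "gR w = gR z" unfolding w_def gR_def fR_homog SR_homog using s by simp
    ultimately show ?thesis by simp
  qed
  then show ?thesis using x Dadm memD by blast
qed

end

context HG begin

lemma max_pos:
  assumes x: "adm x" and mx: "\<forall>z. adm z \<longrightarrow> gR z \<le> gR x"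
  shows "\<forall>i<n. 0 < x i"
proof (rule ccontr)
  assume "\<not> (\<forall>i<n. 0 < x i)"
  then obtain a where a0: "a < n" "\<not> 0 < x a" by auto
  then have a: "a < n" "x a = 0" using x unfolding adm_def by (auto simp: less_eq_real_def)
  define Z where "Z = {i. i < n \<and> x i = 0}"
  have xnn: "\<forall>i. 0 \<le> x i" and xo: "\<forall>i. n \<le> i \<longrightarrow> x i = 0" using x unfolding adm_def by auto
  obtain b where b: "b < n" "0 < x b" using x unfolding adm_def by auto
  have ZsubN: "Z \<subseteq> {..<n}" unfolding Z_def by auto
  have finZ: "finite Z" using ZsubN finite_subset by blast
  have "\<exists>e\<in>E. \<exists>a0\<in>e. \<exists>b0\<in>e. a0 \<in> Z \<and> b0 \<notin> Z"
  proof (rule ccontr)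
    assume nc: "\<not> ?thesis"
    have "a \<notin> Z"
    proof (rule connected_induct_from[of b "\<lambda>v. v \<notin> Z"])
      show "b \<notin> Z" using b unfolding Z_def by auto
      show "\<And>a' b' e. a' \<in> e \<Longrightarrow> b' \<in> e \<Longrightarrow> e \<in> E \<Longrightarrow> a' \<notin> Z \<Longrightarrow> b' \<notin> Z"
        using nc by blast
    qed (use a b in auto)
    then show False using a unfolding Z_def by auto
  qed
  then obtain e a0 b0 where e: "e \<in> E" "a0 \<in> e" "b0 \<in> e" "a0 \<in> Z" "b0 \<notin> Z" by blast
  have fe: "finite e" "card e = m" "e \<subseteq> {..<n}" using e edge_fin edge_card edge_sub by auto
  define k where "k = card (e \<inter> Z)"
  have k1: "1 \<le> k" unfolding k_def using e fe by (metis One_nat_def Suc_leI card_gt_0_iff IntI finite_Int empty_iff)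
  have "e \<inter> Z \<subset> e" using e by auto
  then have km: "k < m" unfolding k_def using fe by (metis psubset_card_mono)
  define P where "P = (\<Prod>j\<in>e - Z. x j)"
  have Ppos: "0 < P" unfolding P_def
  proof (rule prod_pos)
    fix j assume "j \<in> e - Z"
    then show "0 < x j" using fe xnn unfolding Z_def by (auto simp: less_eq_real_def)
  qed
  define f where "f = fR x"
  define S where "S = SR x"
  have f0: "0 \<le> f" unfolding f_def using fR_nonneg xnn by auto
  have S0: "0 < S" unfolding S_def using SR_pos x by auto
  define cz where "cz = real (card Z)"
  have cz0: "0 \<le> cz" unfolding cz_def by simp
  define \<delta> where "\<delta> = min 1 (P * S / (2 * (f * cz + 1)))"
  have fc0: "0 < f * cz + 1" using f0 cz0 by (simp add: add_nonneg_pos)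
  have d0: "0 < \<delta>" unfolding \<delta>_def using Ppos S0 fc0 by simp
  have d1: "\<delta> \<le> 1" unfolding \<delta>_def by simp
  define y where "y = (\<lambda>i. if i \<in> Z then \<delta> else x i)"
  have yx: "x i \<le> y i" for i unfolding y_def Z_def using d0 by auto
  have ynn: "0 \<le> y i" for i using xnn yx order_trans by blast
  have ya: "adm y"
  proof -
    have "y b = x b" using b unfolding y_def Z_def by auto
    moreover have "\<forall>i. n \<le> i \<longrightarrow> y i = 0" using xo unfolding y_def Z_def by auto
    ultimately show ?thesis unfolding adm_def using ynn b by auto
  qed
  have pe: "(\<Prod>j\<in>e. y j) = \<delta> ^ k * P"
  proof -
    have "(\<Prod>j\<in>e. y j) = (\<Prod>j\<in>e \<inter> Z. y j) * (\<Prod>j\<in>e - Z. y j)"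
      using fe by (simp add: prod.Int_Diff)
    also have "(\<Prod>j\<in>e \<inter> Z. y j) = \<delta> ^ k" unfolding k_def y_def by simp
    also have "(\<Prod>j\<in>e - Z. y j) = P" unfolding P_def y_def by simp
    finally show ?thesis .
  qed
  have px0: "(\<Prod>j\<in>e. x j) = 0" using e fe unfolding Z_def by (metis (mono_tags, lifting) mem_Collect_eq prod_zero_iff)
  have fy: "f + \<delta> ^ k * P \<le> fR y"
  proof -
    have "fR y = (\<Prod>j\<in>e. y j) + (\<Sum>e'\<in>E - {e}. \<Prod>j\<in>e'. y j)"
      unfolding fR_def using e finE by (simp add: sum.remove)
    moreover have "f = (\<Prod>j\<in>e. x j) + (\<Sum>e'\<in>E - {e}. \<Prod>j\<in>e'. x j)"
      unfolding f_def fR_def using e finE by (simp add: sum.remove)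
    moreover have "(\<Sum>e'\<in>E - {e}. \<Prod>j\<in>e'. x j) \<le> (\<Sum>e'\<in>E - {e}. \<Prod>j\<in>e'. y j)"
      by (intro sum_mono prod_mono) (use xnn yx in auto)
    ultimately show ?thesis using pe px0 by simp
  qed
  have Sy: "SR y = S + cz * \<delta> ^ m"
  proof -
    have "SR y = (\<Sum>i<n. x i ^ m + (if i \<in> Z then \<delta> ^ m else 0))"
      unfolding SR_def y_def Z_def using m2 by (intro sum.cong) auto
    also have "\<dots> = S + (\<Sum>i<n. if i \<in> Z then \<delta> ^ m else 0)"
      unfolding S_def SR_def by (simp add: sum.distrib)
    also have "(\<Sum>i<n. if i \<in> Z then \<delta> ^ m else 0) = (\<Sum>i\<in>{..<n} \<inter> Z. \<delta> ^ m)"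
      by (simp add: sum.inter_filter[symmetric] Int_def conj_commute)
    also have "{..<n} \<inter> Z = Z" using ZsubN by auto
    finally show ?thesis unfolding cz_def by simp
  qed
  have dm: "\<delta> ^ m \<le> \<delta> ^ k * \<delta>"
  proof -
    have "\<delta> ^ m = \<delta> ^ k * \<delta> ^ (m - k)" using km by (simp add: power_add[symmetric])
    moreover have "\<delta> ^ (m - k) \<le> \<delta>" using power_decreasing[of 1 "m-k" \<delta>] d0 d1 km by simp
    ultimately show ?thesis using d0 by (simp add: mult_left_mono)
  qed
  have key: "f * cz * \<delta> < P * S"
  proof -
    have "\<delta> \<le> P * S / (2 * (f * cz + 1))" unfolding \<delta>_def by simp
    then have "f * cz * \<delta> \<le> f * cz * (P * S / (2 * (f * cz + 1)))"
      using f0 cz0 by (intro mult_left_mono) auto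
    also have "\<dots> < P * S"
    proof -
      have "f * cz / (2 * (f * cz + 1)) < 1" using fc0 f0 cz0 by (simp add: field_simps)
      then have "(f * cz / (2 * (f * cz + 1))) * (P * S) < 1 * (P * S)"
        using Ppos S0 by (intro mult_strict_right_mono) auto
      then show ?thesis by (simp add: field_simps)
    qed
    finally show ?thesis .
  qed
  have "f * (cz * \<delta> ^ m) < \<delta> ^ k * P * S"
  proof -
    have "f * (cz * \<delta> ^ m) \<le> f * (cz * (\<delta> ^ k * \<delta>))"
      using dm f0 cz0 by (simp add: mult_left_mono)
    also have "\<dots> = \<delta> ^ k * (f * cz * \<delta>)" by (simp add: field_simps)
    also have "\<dots> < \<delta> ^ k * (P * S)" using key d0 by simp
    finally show ?thesis by (simp add: field_simps)
  qed
  then have "f * (S + cz * \<delta> ^ m) < (f + \<delta> ^ k * P) * S" by (simp add: field_simps)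
  then have "f / S < (f + \<delta> ^ k * P) / (S + cz * \<delta> ^ m)"
    using S0 cz0 d0 by (simp add: field_simps add_pos_nonneg)
  also have "\<dots> \<le> fR y / SR y"
  proof -
    have "0 \<le> S + cz * \<delta> ^ m" using S0 cz0 d0 by (simp add: add_nonneg_nonneg)
    then show ?thesis unfolding Sy using fy by (rule divide_right_mono[rotated])
  qed
  finally have "gR x < gR y" unfolding gR_def f_def S_def .
  then show False using mx ya by fastforce
qed

end

context HG begin

lemma max_lagrange:
  assumes x: "adm x" and mx: "\<forall>z. adm z \<longrightarrow> gR z \<le> gR x" and i: "i < n" and xi: "0 < x i"
  shows "(\<Sum>e\<in>{e\<in>E. i \<in> e}. \<Prod>j\<in>e-{i}. x j) = real m * gR x * x i ^ (m-1)"
proof -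
  define a where "a = (\<Sum>e\<in>E \<inter> - {e. i \<in> e}. \<Prod>j\<in>e. x j)"
  define b where "b = (\<Sum>e\<in>E \<inter> {e. i \<in> e}. \<Prod>j\<in>e-{i}. x j)"
  define c0 where "c0 = (\<Sum>j\<in>{..<n} - {i}. x j ^ m)"
  have xnn: "\<forall>j. 0 \<le> x j" and xo: "\<forall>j. n \<le> j \<longrightarrow> x j = 0" using x unfolding adm_def by auto
  have c0nn: "0 \<le> c0" unfolding c0_def using xnn by (intro sum_nonneg) auto
  have fz: "fR (x(i := t)) = a + b * t" for t
  proof -
    have "fR (x(i := t)) = (\<Sum>e\<in>E. if i \<in> e then t * (\<Prod>j\<in>e-{i}. x j) else (\<Prod>j\<in>e. x j))"
      unfolding fR_def
    proof (intro sum.cong refl)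
      fix e assume e: "e \<in> E"
      show "(\<Prod>j\<in>e. (x(i := t)) j) = (if i \<in> e then t * (\<Prod>j\<in>e-{i}. x j) else (\<Prod>j\<in>e. x j))"
      proof (cases "i \<in> e")
        case True
        then have "(\<Prod>j\<in>e. (x(i := t)) j) = (x(i := t)) i * (\<Prod>j\<in>e-{i}. (x(i := t)) j)"
          using edge_fin[OF e] by (simp add: prod.remove)
        also have "(\<Prod>j\<in>e-{i}. (x(i := t)) j) = (\<Prod>j\<in>e-{i}. x j)" by (intro prod.cong) auto
        finally show ?thesis using True by simp
      next
        case False
        then show ?thesis by (simp, intro prod.cong) auto
      qed
    qed
    also have "\<dots> = (\<Sum>e\<in>E \<inter> {e. i \<in> e}. t * (\<Prod>j\<in>e-{i}. x j)) + a"
      unfolding a_def using finE by (simp add: sum.If_cases)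
    also have "\<dots> = a + b * t" unfolding b_def by (simp add: sum_distrib_left mult.commute)
    finally show ?thesis .
  qed
  have Sz: "SR (x(i := t)) = c0 + t ^ m" for t
  proof -
    have "SR (x(i := t)) = (x(i := t)) i ^ m + (\<Sum>j\<in>{..<n} - {i}. (x(i := t)) j ^ m)"
      unfolding SR_def using i by (simp add: sum.remove)
    also have "(\<Sum>j\<in>{..<n} - {i}. (x(i := t)) j ^ m) = c0" unfolding c0_def by (intro sum.cong) auto
    finally show ?thesis by (simp only: fun_upd_same add.commute)
  qed
  define G where "G = gR x"
  have xx: "x(i := x i) = x" by simp
  have SRx: "SR x = c0 + x i ^ m" using Sz[of "x i"] by simp
  have fRx: "fR x = a + b * x i" using fz[of "x i"] by simp
  have Spos: "0 < c0 + x i ^ m" using c0nn xi by (simp add: add_nonneg_pos)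
  define L where "L = (\<lambda>t. a + b * t - G * (c0 + t ^ m))"
  have Lx: "L (x i) = 0" unfolding L_def G_def gR_def using Spos SRx fRx by simp
  have Lle: "L t \<le> L (x i)" if "\<bar>x i - t\<bar> < x i" for t
  proof -
    have t: "0 < t" using that by auto
    have "adm (x(i := t))" using x t i unfolding adm_def by auto
    then have "gR (x(i := t)) \<le> G" using mx unfolding G_def by auto
    then have "(a + b * t) / (c0 + t ^ m) \<le> G" unfolding gR_def fz Sz .
    moreover have "0 < c0 + t ^ m" using c0nn t by (simp add: add_nonneg_pos)
    ultimately have "a + b * t \<le> G * (c0 + t ^ m)" by (simp add: divide_le_eq)
    then show ?thesis unfolding Lx unfolding L_def by simp
  qed
  have "DERIV L (x i) :> b - G * (real m * x i ^ (m - 1))"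
    unfolding L_def by (auto intro!: derivative_eq_intros)
  then have "b - G * (real m * x i ^ (m - 1)) = 0"
    by (rule DERIV_local_max) (use xi Lle in auto)
  moreover have "{e\<in>E. i \<in> e} = E \<inter> {e. i \<in> e}" by auto
  ultimately show ?thesis unfolding b_def G_def by simp
qed

lemma PF_exists:
  obtains p :: "nat \<Rightarrow> real" and r :: real where "\<forall>i<n. 0 < p i" "\<forall>i. n \<le> i \<longrightarrow> p i = 0" "p 0 = 1" "0 \<le> r"
     "\<forall>i<n. (\<Sum>e\<in>{e\<in>E. i \<in> e}. \<Prod>j\<in>e-{i}. p j) = r * p i ^ (m-1)"
proof -
  obtain x where x: "adm x" "\<forall>z. adm z \<longrightarrow> gR z \<le> gR x" using max_point by blast
  have pos: "\<forall>i<n. 0 < x i" using max_pos[OF x] .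
  have xo: "\<forall>j. n \<le> j \<longrightarrow> x j = 0" using x unfolding adm_def by auto
  have x0: "0 < x 0" using pos n0 by auto
  define r where "r = real m * gR x"
  have r0: "0 \<le> r"
  proof -
    have "0 \<le> fR x" using fR_nonneg x unfolding adm_def by auto
    moreover have "0 < SR x" using SR_pos x by auto
    ultimately show ?thesis unfolding r_def gR_def by simp
  qed
  define p where "p = (\<lambda>j. x j / x 0)"
  have eig: "(\<Sum>e\<in>{e\<in>E. i \<in> e}. \<Prod>j\<in>e-{i}. p j) = r * p i ^ (m-1)" if i: "i < n" for i
  proof -
    have "(\<Sum>e\<in>{e\<in>E. i \<in> e}. \<Prod>j\<in>e-{i}. p j)
        = (\<Sum>e\<in>{e\<in>E. i \<in> e}. (\<Prod>j\<in>e-{i}. x j) / x 0 ^ (m - 1))"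
    proof (intro sum.cong refl)
      fix e assume e: "e \<in> {e\<in>E. i \<in> e}"
      have "card (e - {i}) = m - 1" using e edge_card edge_fin by (simp add: card_Diff_singleton)
      then show "(\<Prod>j\<in>e-{i}. p j) = (\<Prod>j\<in>e-{i}. x j) / x 0 ^ (m - 1)"
        unfolding p_def by (simp add: prod_dividef)
    qed
    also have "\<dots> = (\<Sum>e\<in>{e\<in>E. i \<in> e}. \<Prod>j\<in>e-{i}. x j) / x 0 ^ (m - 1)"
      by (simp add: sum_divide_distrib)
    also have "\<dots> = r * x i ^ (m - 1) / x 0 ^ (m - 1)"
      using max_lagrange[OF x i] pos i unfolding r_def by simp
    also have "\<dots> = r * p i ^ (m - 1)" unfolding p_def by (simp add: power_divide)
    finally show ?thesis .
  qed
  have a1: "\<forall>i<n. 0 < p i" using pos x0 unfolding p_def by simp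
  have a2: "\<forall>i. n \<le> i \<longrightarrow> p i = 0" using xo unfolding p_def by simp
  have a3: "p 0 = 1" using x0 unfolding p_def by simp
  show thesis
    by (rule that[OF a1 a2 a3 r0]) (use eig in blast)
qed

end

lemma sum_eq_each:
  fixes V W :: "'a \<Rightarrow> real"
  assumes "finite S" "\<forall>e\<in>S. V e \<le> W e" "sum V S = sum W S"
  shows "\<forall>e\<in>S. V e = W e"
proof (rule ccontr)
  assume "\<not> (\<forall>e\<in>S. V e = W e)"
  then have "\<exists>a\<in>S. V a < W a" using assms(2) by force
  then have "sum V S < sum W S" using sum_strict_mono_ex1[OF assms(1,2)] by blast
  then show False using assms(3) by simp
qed

lemma prod_eq_each:
  fixes a b :: "'a \<Rightarrow> real"
  assumes "finite S" "\<forall>j\<in>S. 0 \<le> a j \<and> a j \<le> b j" "\<forall>j\<in>S. 0 < b j" "prod a S = prod b S"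
  shows "\<forall>j\<in>S. a j = b j"
proof (rule ccontr)
  assume "\<not> (\<forall>j\<in>S. a j = b j)"
  then obtain j where j: "j \<in> S" "a j < b j" using assms(2) by force
  have "prod a S = a j * prod a (S - {j})" using assms(1) j by (simp add: prod.remove)
  also have "\<dots> \<le> a j * prod b (S - {j})"
    using assms j by (intro mult_left_mono prod_mono) auto
  also have "\<dots> < b j * prod b (S - {j})"
    using assms j by (intro mult_strict_right_mono prod_pos) auto
  also have "\<dots> = prod b S" using assms(1) j by (simp add: prod.remove)
  finally show False using assms(4) by simp
qed

locale HGP = HG +
  fixes p :: "nat \<Rightarrow> real" and r :: real
  assumes p_pos: "\<forall>i<n. 0 < p i" and p_out: "\<forall>i. n \<le> i \<longrightarrow> p i = 0" and p_0: "p 0 = 1"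
    and r_nn: "0 \<le> r"
    and p_eig: "\<forall>i<n. (\<Sum>e\<in>{e\<in>E. i \<in> e}. \<Prod>j\<in>e-{i}. p j) = r * p i ^ (m-1)"
begin

abbreviation "AT \<equiv> adj_tensor m E"

definition pcx :: "nat \<Rightarrow> complex" where "pcx i = complex_of_real (p i)"

lemma TA: "i < n \<Longrightarrow> tensor_apply m n AT x i = (\<Sum>e\<in>{e\<in>E. i \<in> e}. \<Prod>j\<in>e-{i}. x j)"
  using tensor_apply_adj[OF U m2] by blast

lemma pcx_eig: "is_eigenpair m n AT (complex_of_real r) pcx"
proof -
  have "tensor_apply m n AT pcx i = complex_of_real r * pcx i ^ (m - 1)" if "i < n" for i
  proof -
    have "tensor_apply m n AT pcx i = complex_of_real (\<Sum>e\<in>{e\<in>E. i \<in> e}. \<Prod>j\<in>e-{i}. p j)"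
      unfolding TA[OF that] pcx_def by simp
    also have "\<dots> = complex_of_real r * pcx i ^ (m - 1)" using p_eig that unfolding pcx_def by simp
    finally show ?thesis .
  qed
  moreover have "\<exists>i<n. pcx i \<noteq> 0" using n0 p_0 unfolding pcx_def by auto
  ultimately show ?thesis unfolding is_eigenpair_def pcx_def using p_out by auto
qed

lemma bound_chain:
  fixes x :: "nat \<Rightarrow> complex"
  assumes i: "i < n" and t: "0 \<le> t" and le: "\<forall>j<n. cmod (x j) \<le> t * p j"
  shows "(\<Sum>e\<in>{e\<in>E. i \<in> e}. \<Prod>j\<in>e-{i}. cmod (x j)) \<le> (\<Sum>e\<in>{e\<in>E. i \<in> e}. \<Prod>j\<in>e-{i}. t * p j)"
    and "(\<Sum>e\<in>{e\<in>E. i \<in> e}. \<Prod>j\<in>e-{i}. t * p j) = t ^ (m - 1) * (r * p i ^ (m - 1))"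
proof -
  show "(\<Sum>e\<in>{e\<in>E. i \<in> e}. \<Prod>j\<in>e-{i}. cmod (x j)) \<le> (\<Sum>e\<in>{e\<in>E. i \<in> e}. \<Prod>j\<in>e-{i}. t * p j)"
  proof (intro sum_mono prod_mono conjI)
    fix e j assume e: "e \<in> {e\<in>E. i \<in> e}" and j: "j \<in> e - {i}"
    then have "j < n" using edge_sub by auto
    then show "cmod (x j) \<le> t * p j" using le by auto
  qed simp
  have "(\<Sum>e\<in>{e\<in>E. i \<in> e}. \<Prod>j\<in>e-{i}. t * p j) = (\<Sum>e\<in>{e\<in>E. i \<in> e}. t ^ (m-1) * (\<Prod>j\<in>e-{i}. p j))"
  proof (intro sum.cong refl)
    fix e assume e: "e \<in> {e\<in>E. i \<in> e}"
    have "card (e - {i}) = m - 1" using e edge_card edge_fin by (simp add: card_Diff_singleton)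
    then show "(\<Prod>j\<in>e-{i}. t * p j) = t ^ (m-1) * (\<Prod>j\<in>e-{i}. p j)" by (simp add: prod.distrib)
  qed
  also have "\<dots> = t ^ (m - 1) * (r * p i ^ (m - 1))" using p_eig i by (simp add: sum_distrib_left[symmetric])
  finally show "(\<Sum>e\<in>{e\<in>E. i \<in> e}. \<Prod>j\<in>e-{i}. t * p j) = t ^ (m - 1) * (r * p i ^ (m - 1))" .
qed

lemma norm_chain:
  fixes x :: "nat \<Rightarrow> complex"
  shows "cmod (\<Sum>e\<in>{e\<in>E. i \<in> e}. \<Prod>j\<in>e-{i}. x j) \<le> (\<Sum>e\<in>{e\<in>E. i \<in> e}. \<Prod>j\<in>e-{i}. cmod (x j))"
proof -
  have "cmod (\<Sum>e\<in>{e\<in>E. i \<in> e}. \<Prod>j\<in>e-{i}. x j) \<le> (\<Sum>e\<in>{e\<in>E. i \<in> e}. cmod (\<Prod>j\<in>e-{i}. x j))"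
    by (rule norm_sum)
  also have "\<dots> = (\<Sum>e\<in>{e\<in>E. i \<in> e}. \<Prod>j\<in>e-{i}. cmod (x j))" by (simp add: prod_norm)
  finally show ?thesis .
qed

lemma max_ratio:
  fixes x :: "nat \<Rightarrow> complex"
  assumes "\<exists>j<n. x j \<noteq> 0"
  obtains t i where "0 < t" "i < n" "cmod (x i) = t * p i" "\<forall>j<n. cmod (x j) \<le> t * p j"
proof -
  define R where "R = (\<lambda>j. cmod (x j) / p j) ` {..<n}"
  define t where "t = Max R"
  have fR': "finite R" "R \<noteq> {}" unfolding R_def using n0 by auto
  then have "t \<in> R" unfolding t_def by (rule Max_in)
  then obtain i where i: "i < n" "t = cmod (x i) / p i" unfolding R_def by auto
  have le: "cmod (x j) \<le> t * p j" if "j < n" for j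
  proof -
    have "cmod (x j) / p j \<le> t" unfolding t_def using fR' that by (intro Max_ge) (auto simp: R_def)
    then show ?thesis using p_pos that by (simp add: divide_le_eq)
  qed
  obtain j where j: "j < n" "x j \<noteq> 0" using assms by auto
  have "0 < cmod (x j) / p j" using j p_pos by simp
  also have "\<dots> \<le> t" unfolding t_def using fR' j by (intro Max_ge) (auto simp: R_def)
  finally have "0 < t" .
  moreover have "cmod (x i) = t * p i"
  proof -
    have "0 < p i" using i p_pos by auto
    then show ?thesis using i(2) by simp
  qed
  ultimately show thesis using that i le by blast
qed

lemma eig_bound:
  assumes ep: "is_eigenpair m n AT lam x"
  shows "cmod lam \<le> r"
proof -
  have nz: "\<exists>j<n. x j \<noteq> 0" using ep unfolding is_eigenpair_def by auto
  obtain t i where ti: "0 < t" "i < n" "cmod (x i) = t * p i" "\<forall>j<n. cmod (x j) \<le> t * p j"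
    using max_ratio[OF nz] by blast
  have xi: "0 < cmod (x i)" using ti p_pos by simp
  have "cmod lam * cmod (x i) ^ (m - 1) = cmod (tensor_apply m n AT x i)"
    using ep ti unfolding is_eigenpair_def by (simp add: norm_mult norm_power)
  also have "\<dots> \<le> t ^ (m - 1) * (r * p i ^ (m - 1))"
    using norm_chain[of x i] bound_chain[OF ti(2) _ ti(4)] ti unfolding TA[OF ti(2)] by linarith
  also have "\<dots> = r * cmod (x i) ^ (m - 1)" using ti by (simp add: power_mult_distrib)
  finally show ?thesis using xi by simp
qed

lemma spec_rad: "spectral_radius m n AT = r"
  unfolding spectral_radius_def
proof (rule cSup_eq_maximum)
  show "r \<in> {cmod lam |lam. \<exists>x. is_eigenpair m n AT lam x}"
    using pcx_eig r_nn by (intro CollectI exI[of _ "complex_of_real r"]) auto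
  show "\<And>y. y \<in> {cmod lam |lam. \<exists>x. is_eigenpair m n AT lam x} \<Longrightarrow> y \<le> r"
    using eig_bound by blast
qed

lemma rho_char: "y \<in> rho_eigvecs m n AT \<longleftrightarrow> is_eigenpair m n AT (complex_of_real r) y \<and> y 0 = 1"
  unfolding rho_eigvecs_def spec_rad by simp

lemma rho_abs:
  assumes y: "y \<in> rho_eigvecs m n AT"
  shows "\<forall>v<n. cmod (y v) = p v"
proof -
  have ep: "is_eigenpair m n AT (complex_of_real r) y" and y0: "y 0 = 1" using y rho_char by auto
  have nz: "\<exists>j<n. y j \<noteq> 0" using ep unfolding is_eigenpair_def by auto
  obtain t i where ti: "0 < t" "i < n" "cmod (y i) = t * p i" "\<forall>j<n. cmod (y j) \<le> t * p j"
    using max_ratio[OF nz] by blast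
  define M where "M = {v. v < n \<and> cmod (y v) = t * p v}"
  have clos: "b \<in> M" if a: "a \<in> M" and e: "e \<in> E" "a \<in> e" "b \<in> e" for a b e
  proof (cases "b = a")
    case True then show ?thesis using a by simp
  next
    case False
    have an: "a < n" and ya: "cmod (y a) = t * p a" using a unfolding M_def by auto
    define V where "V = (\<lambda>e. \<Prod>j\<in>e-{a}. cmod (y j))"
    define W where "W = (\<lambda>e. \<Prod>j\<in>e-{a}. t * p j)"
    have "r * cmod (y a) ^ (m - 1) = cmod (tensor_apply m n AT y a)"
      using ep an r_nn unfolding is_eigenpair_def by (simp add: norm_mult norm_power)
    also have "\<dots> \<le> sum V {e\<in>E. a \<in> e}" unfolding TA[OF an] V_def by (rule norm_chain)
    finally have s1: "r * cmod (y a) ^ (m - 1) \<le> sum V {e\<in>E. a \<in> e}" .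
    have s2: "sum V {e\<in>E. a \<in> e} \<le> sum W {e\<in>E. a \<in> e}"
      unfolding V_def W_def using bound_chain(1)[OF an _ ti(4)] ti by simp
    have s3: "sum W {e\<in>E. a \<in> e} = r * cmod (y a) ^ (m - 1)"
      unfolding W_def bound_chain(2)[OF an less_imp_le[OF ti(1)] ti(4)] using ti ya by (simp add: power_mult_distrib)
    have "sum V {e\<in>E. a \<in> e} = sum W {e\<in>E. a \<in> e}" using s1 s2 s3 by linarith
    moreover have "\<forall>e\<in>{e\<in>E. a \<in> e}. V e \<le> W e"
      unfolding V_def W_def
    proof (intro ballI prod_mono conjI)
      fix e j assume "e \<in> {e\<in>E. a \<in> e}" "j \<in> e - {a}"
      then have "j < n" using edge_sub by auto
      then show "cmod (y j) \<le> t * p j" using ti by auto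
    qed simp
    ultimately have "\<forall>e'\<in>{e\<in>E. a \<in> e}. V e' = W e'"
      by (intro sum_eq_each) (use finE in auto)
    then have VW: "V e = W e" using e by blast
    have fe: "finite (e - {a})" using edge_fin e by simp
    have le1: "\<forall>j\<in>e - {a}. 0 \<le> cmod (y j) \<and> cmod (y j) \<le> t * p j"
      using ti edge_sub e by auto
    have le2: "\<forall>j\<in>e - {a}. 0 < t * p j"
    proof
      fix j assume "j \<in> e - {a}"
      then have "j < n" using edge_sub e by auto
      then show "0 < t * p j" using ti p_pos by auto
    qed
    have "\<forall>j\<in>e-{a}. cmod (y j) = t * p j"
      using prod_eq_each[OF fe le1 le2] VW unfolding V_def W_def by blast
    then show ?thesis using False e edge_sub unfolding M_def by auto
  qed
  have allM: "v \<in> M" if "v < n" for v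
  proof (rule connected_induct_from[of i "\<lambda>v. v \<in> M"])
    show "i < n" using ti by simp
    show "i \<in> M" using ti unfolding M_def by simp
    show "\<And>a b e. a \<in> e \<Longrightarrow> b \<in> e \<Longrightarrow> e \<in> E \<Longrightarrow> a \<in> M \<Longrightarrow> b \<in> M" using clos by blast
    show "v < n" by fact
  qed
  have "0 \<in> M" using allM n0 by auto
  then have "t = 1" using y0 p_0 unfolding M_def by simp
  then show ?thesis using allM unfolding M_def by simp
qed

definition dy :: "(nat \<Rightarrow> complex) \<Rightarrow> nat \<Rightarrow> complex" where
  "dy y = (\<lambda>i. if i < n then y i / pcx i else 1)"

end

lemma unit_re_one:
  fixes u :: complex assumes "cmod u = 1" "Re u = 1" shows "u = 1"
proof -
  have "(cmod u)^2 = (Re u)^2 + (Im u)^2" by (rule cmod_power2)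
  then have "Im u = 0" using assms by simp
  then show ?thesis using assms by (simp add: complex_eq_iff)
qed

context HGP begin

lemma pcx_nz: "i < n \<Longrightarrow> pcx i \<noteq> 0" using p_pos unfolding pcx_def by auto
lemma pcx_out: "n \<le> i \<Longrightarrow> pcx i = 0" using p_out unfolding pcx_def by auto

lemma rho_decomp:
  assumes y: "y \<in> rho_eigvecs m n AT"
  shows "\<forall>i<n. y i = dy y i * pcx i" "\<forall>i<n. cmod (dy y i) = 1" "\<forall>i. n \<le> i \<longrightarrow> y i = 0"
proof -
  show "\<forall>i<n. y i = dy y i * pcx i" unfolding dy_def using pcx_nz by simp
  show "\<forall>i<n. cmod (dy y i) = 1" using rho_abs[OF y] p_pos
    by (auto simp: norm_divide pcx_def dy_def)
  show "\<forall>i. n \<le> i \<longrightarrow> y i = 0" using y rho_char unfolding is_eigenpair_def by auto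
qed

lemma rho_goodE:
  assumes y: "y \<in> rho_eigvecs m n AT"
  shows "goodE (dy y)"
proof -
  define d where "d = dy y"
  have ep: "is_eigenpair m n AT (complex_of_real r) y" and y0: "y 0 = 1" using y rho_char by auto
  have yd: "\<forall>i<n. y i = d i * pcx i" and dn: "\<forall>i<n. cmod (d i) = 1"
    using rho_decomp[OF y] unfolding d_def by auto
  have dnz: "\<forall>i<n. d i \<noteq> 0" using dn by auto
  have d0: "d 0 = 1" unfolding d_def dy_def using n0 y0 p_0 pcx_def by simp
  have main: "(\<Prod>j\<in>e-{i}. d j) = d i ^ (m-1)" if e: "e \<in> E" "i \<in> e" for e i
  proof -
    have i: "i < n" using e edge_sub by auto
    define S where "S = {e\<in>E. i \<in> e}"
    have finS: "finite S" unfolding S_def using finE by simp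
    define w where "w = (\<lambda>e. \<Prod>j\<in>e-{i}. p j)"
    define u where "u = (\<lambda>e. (\<Prod>j\<in>e-{i}. d j) / d i ^ (m-1))"
    have wpos: "0 < w e'" if "e' \<in> S" for e'
      unfolding w_def using that edge_sub p_pos unfolding S_def by (intro prod_pos) auto
    have un: "cmod (u e') = 1" if "e' \<in> S" for e'
    proof -
      have "cmod (\<Prod>j\<in>e'-{i}. d j) = 1"
        using that edge_sub dn unfolding S_def by (auto simp: prod_norm[symmetric] intro!: prod.neutral)
      then show ?thesis unfolding u_def using dn i by (simp add: norm_divide norm_power)
    qed
    have py: "(\<Prod>j\<in>e'-{i}. y j) = (\<Prod>j\<in>e'-{i}. d j) * complex_of_real (w e')" if "e' \<in> S" for e'
    proof -
      have "(\<Prod>j\<in>e'-{i}. y j) = (\<Prod>j\<in>e'-{i}. d j * pcx j)"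
        using that edge_sub yd unfolding S_def by (intro prod.cong) auto
      also have "\<dots> = (\<Prod>j\<in>e'-{i}. d j) * (\<Prod>j\<in>e'-{i}. pcx j)" by (simp add: prod.distrib)
      also have "(\<Prod>j\<in>e'-{i}. pcx j) = complex_of_real (w e')" unfolding w_def pcx_def by simp
      finally show ?thesis .
    qed
    have sw: "(\<Sum>e'\<in>S. w e') = r * p i ^ (m-1)" using p_eig i unfolding S_def w_def by simp
    have "(\<Sum>e'\<in>S. (\<Prod>j\<in>e'-{i}. d j) * complex_of_real (w e')) = (\<Sum>e'\<in>S. \<Prod>j\<in>e'-{i}. y j)"
      using py by simp
    also have "\<dots> = complex_of_real r * y i ^ (m-1)"
    proof -
      have "tensor_apply m n AT y i = complex_of_real r * y i ^ (m-1)"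
        using ep i unfolding is_eigenpair_def by auto
      then show ?thesis using TA[OF i] unfolding S_def by simp
    qed
    also have "\<dots> = d i ^ (m-1) * complex_of_real (\<Sum>e'\<in>S. w e')"
      using yd i unfolding sw pcx_def by (simp add: power_mult_distrib)
    finally have eq1: "(\<Sum>e'\<in>S. (\<Prod>j\<in>e'-{i}. d j) * complex_of_real (w e')) = d i ^ (m-1) * complex_of_real (\<Sum>e'\<in>S. w e')" .
    have "(\<Sum>e'\<in>S. u e' * complex_of_real (w e')) = (\<Sum>e'\<in>S. (\<Prod>j\<in>e'-{i}. d j) * complex_of_real (w e')) / d i ^ (m-1)"
      unfolding u_def by (simp add: sum_divide_distrib)
    also have "\<dots> = complex_of_real (\<Sum>e'\<in>S. w e')" unfolding eq1 using dnz i by simp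
    finally have eq2: "(\<Sum>e'\<in>S. u e' * complex_of_real (w e')) = complex_of_real (\<Sum>e'\<in>S. w e')" .
    have "(\<Sum>e'\<in>S. Re (u e') * w e') = (\<Sum>e'\<in>S. w e')"
    proof -
      have "Re (\<Sum>e'\<in>S. u e' * complex_of_real (w e')) = (\<Sum>e'\<in>S. Re (u e') * w e')" by (simp add: Re_sum)
      then show ?thesis using eq2 by simp
    qed
    moreover have "\<forall>e'\<in>S. Re (u e') * w e' \<le> w e'"
    proof
      fix e' assume "e' \<in> S"
      have "Re (u e') \<le> 1" using un[OF \<open>e' \<in> S\<close>] complex_Re_le_cmod[of "u e'"] by simp
      then show "Re (u e') * w e' \<le> w e'" using wpos[OF \<open>e' \<in> S\<close>] by (simp add: mult_left_le_one_le)
    qed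
    ultimately have "\<forall>e'\<in>S. Re (u e') * w e' = w e'"
      using sum_eq_each[OF finS, of "\<lambda>e'. Re (u e') * w e'" w] by blast
    moreover have eS: "e \<in> S" using e unfolding S_def by simp
    ultimately have "Re (u e) = 1" using wpos[OF eS] by force
    then have "u e = 1" using un[OF eS] unit_re_one by blast
    then show ?thesis unfolding u_def using dnz i by (simp add: divide_eq_1_iff)
  qed
  show ?thesis unfolding goodE_def d_def[symmetric] using dnz d0 main by auto
qed

lemma pos_eq: "pos_eigvec m n AT = pcx"
  unfolding pos_eigvec_def
proof (rule the_equality)
  show "pcx \<in> rho_eigvecs m n AT \<and> (\<forall>i<n. pcx i \<in> \<real> \<and> 0 < Re (pcx i))"
    using pcx_eig rho_char p_0 p_pos unfolding pcx_def by auto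
next
  fix y assume a: "y \<in> rho_eigvecs m n AT \<and> (\<forall>i<n. y i \<in> \<real> \<and> 0 < Re (y i))"
  show "y = pcx"
  proof
    fix v show "y v = pcx v"
    proof (cases "v < n")
      case True
      then have "y v \<in> \<real>" "0 < Re (y v)" using a by auto
      then have "y v = complex_of_real (Re (y v))" by (simp add: complex_eq_iff complex_is_Real_iff)
      moreover have "cmod (y v) = p v" using rho_abs a True by auto
      moreover have "cmod (y v) = Re (y v)" using \<open>y v \<in> \<real>\<close> \<open>0 < Re (y v)\<close>
        by (simp add: cmod_eq_Re complex_is_Real_iff)
      ultimately show ?thesis unfolding pcx_def by simp
    next
      case False
      then show ?thesis using rho_decomp(3) a pcx_out by auto
    qed
  qed
qed

definition form :: "(nat \<Rightarrow> complex) \<Rightarrow> nat \<Rightarrow> complex" where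
  "form c = (\<lambda>i. if i < n then c i * pcx i else 0)"

lemma rho_form: "y \<in> rho_eigvecs m n AT \<Longrightarrow> y = form (dy y)"
  using rho_decomp unfolding form_def by (auto simp: fun_eq_iff)

lemma dy_form: "i < n \<Longrightarrow> dy (form c) i = c i"
  unfolding dy_def form_def using pcx_nz by simp

lemma eig_op_form:
  assumes "\<forall>i<n. cmod (c i) = 1" "\<forall>i<n. cmod (c' i) = 1"
  shows "eig_op m n AT (form c) (form c') = form (\<lambda>i. c i * c' i)"
proof
  fix i show "eig_op m n AT (form c) (form c') i = form (\<lambda>i. c i * c' i) i"
  proof (cases "i < n")
    case True
    have "form c i / complex_of_real (cmod (form c i)) = c i"
      using True assms p_pos[rule_format, OF True] unfolding form_def pcx_def by (simp add: norm_mult)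
    moreover have "form c' i / complex_of_real (cmod (form c' i)) = c' i"
      using True assms p_pos[rule_format, OF True] unfolding form_def pcx_def by (simp add: norm_mult)
    ultimately show ?thesis unfolding eig_op_def pos_eq form_def using True by simp
  next
    case False then show ?thesis unfolding eig_op_def form_def by simp
  qed
qed

lemma pcx_form: "pcx = form (\<lambda>_. 1)"
  unfolding form_def using pcx_out by (auto simp: fun_eq_iff not_less)

lemma iter_form:
  assumes "\<forall>i<n. cmod (c i) = 1"
  shows "((\<lambda>z. eig_op m n AT (form c) z) ^^ k) pcx = form (\<lambda>i. c i ^ k)"
proof (induction k)
  case 0 then show ?case using pcx_form by simp
next
  case (Suc k)
  have "((\<lambda>z. eig_op m n AT (form c) z) ^^ Suc k) pcx = eig_op m n AT (form c) (form (\<lambda>i. c i ^ k))"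
    using Suc by simp
  also have "\<dots> = form (\<lambda>i. c i * c i ^ k)"
    by (rule eig_op_form) (use assms in \<open>auto simp: norm_power\<close>)
  finally show ?case by simp
qed

end

definition GU :: "nat \<Rightarrow> nat set \<Rightarrow> (nat \<Rightarrow> complex) monoid" where
  "GU m T = \<lparr>carrier = Uset m T, mult = (\<lambda>f g v. f v * g v), one = (\<lambda>v. 1)\<rparr>"

lemma GU_simps: "carrier (GU m T) = Uset m T" "f \<otimes>\<^bsub>GU m T\<^esub> g = (\<lambda>v. f v * g v)" "\<one>\<^bsub>GU m T\<^esub> = (\<lambda>v. 1)"
  unfolding GU_def by simp_all

lemma Uset_mult: "f \<in> Uset m T \<Longrightarrow> g \<in> Uset m T \<Longrightarrow> (\<lambda>v. f v * g v) \<in> Uset m T"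
  unfolding Uset_def by (auto simp: power_mult_distrib)

lemma Uset_powinv:
  assumes "0 < m" "f \<in> Uset m T"
  shows "(\<lambda>v. f v ^ (m-1)) \<in> Uset m T" "(\<lambda>v. f v ^ (m-1) * f v) = (\<lambda>v. 1)"
proof -
  show "(\<lambda>v. f v ^ (m-1)) \<in> Uset m T"
    unfolding Uset_def
  proof (intro CollectI conjI ballI allI impI)
    fix v assume v: "v \<in> T"
    have "(f v ^ (m-1)) ^ m = (f v ^ m) ^ (m-1)" by (metis power_mult mult.commute)
    then show "(f v ^ (m-1)) ^ m = 1" using assms v unfolding Uset_def by simp
  next
    fix v assume "v \<notin> T" then show "f v ^ (m-1) = 1" using assms unfolding Uset_def by simp
  qed
  show "(\<lambda>v. f v ^ (m-1) * f v) = (\<lambda>v. 1)"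
  proof
    fix v show "f v ^ (m-1) * f v = 1"
    proof (cases "v \<in> T")
      case True
      have "f v ^ (m-1) * f v = f v ^ m" using assms(1) by (simp add: power_Suc2[symmetric])
      then show ?thesis using True assms unfolding Uset_def by auto
    next
      case False then show ?thesis using assms unfolding Uset_def by auto
    qed
  qed
qed

lemma GU_group: "0 < m \<Longrightarrow> group (GU m T)"
proof (rule groupI)
  assume m: "0 < m"
  show "\<one>\<^bsub>GU m T\<^esub> \<in> carrier (GU m T)" unfolding GU_simps Uset_def by simp
  show "\<And>x y. x \<in> carrier (GU m T) \<Longrightarrow> y \<in> carrier (GU m T) \<Longrightarrow> x \<otimes>\<^bsub>GU m T\<^esub> y \<in> carrier (GU m T)"
    unfolding GU_simps by (rule Uset_mult)
  show "\<And>x y z. x \<otimes>\<^bsub>GU m T\<^esub> y \<otimes>\<^bsub>GU m T\<^esub> z = x \<otimes>\<^bsub>GU m T\<^esub> (y \<otimes>\<^bsub>GU m T\<^esub> z)"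
    unfolding GU_simps by (simp add: mult.assoc)
  show "\<And>x. \<one>\<^bsub>GU m T\<^esub> \<otimes>\<^bsub>GU m T\<^esub> x = x" unfolding GU_simps by simp
  show "\<exists>y\<in>carrier (GU m T). y \<otimes>\<^bsub>GU m T\<^esub> x = \<one>\<^bsub>GU m T\<^esub>" if x: "x \<in> carrier (GU m T)" for x
  proof (rule bexI[where x="\<lambda>v. x v ^ (m-1)"])
    have xu: "x \<in> Uset m T" using x unfolding GU_simps .
    show "(\<lambda>v. x v ^ (m-1)) \<otimes>\<^bsub>GU m T\<^esub> x = \<one>\<^bsub>GU m T\<^esub>"
      unfolding GU_simps using Uset_powinv(2)[OF m xu] .
    show "(\<lambda>v. x v ^ (m-1)) \<in> carrier (GU m T)" unfolding GU_simps using Uset_powinv(1)[OF m xu] .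
  qed
qed

lemma GU_inv:
  assumes "0 < m" "f \<in> Uset m T" shows "inv\<^bsub>GU m T\<^esub> f = (\<lambda>v. f v ^ (m-1))"
proof (rule group.inv_equality[OF GU_group[OF assms(1)]])
  show "(\<lambda>v. f v ^ (m - 1)) \<otimes>\<^bsub>GU m T\<^esub> f = \<one>\<^bsub>GU m T\<^esub>"
    unfolding GU_simps using Uset_powinv(2)[OF assms] .
  show "f \<in> carrier (GU m T)" unfolding GU_simps using assms(2) .
  show "(\<lambda>v. f v ^ (m - 1)) \<in> carrier (GU m T)" unfolding GU_simps using Uset_powinv(1)[OF assms] .
qed

lemma GU_subgroup:
  assumes m: "0 < m" and K: "K \<subseteq> Uset m T" "(\<lambda>v. 1) \<in> K"
    "\<forall>f\<in>K. \<forall>g\<in>K. (\<lambda>v. f v * g v) \<in> K" "\<forall>f\<in>K. (\<lambda>v. f v ^ (m-1)) \<in> K"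
  shows "subgroup K (GU m T)"
proof (rule group.subgroupI[OF GU_group[OF m]])
  show "K \<subseteq> carrier (GU m T)" using K unfolding GU_simps by simp
  show "K \<noteq> {}" using K by auto
  show "inv\<^bsub>GU m T\<^esub> a \<in> K" if a: "a \<in> K" for a
  proof -
    have "a \<in> Uset m T" using a K(1) by blast
    then have "inv\<^bsub>GU m T\<^esub> a = (\<lambda>v. a v ^ (m-1))" by (rule GU_inv[OF m])
    moreover have "(\<lambda>v. a v ^ (m-1)) \<in> K" using bspec[OF K(4) a] .
    ultimately show ?thesis by simp
  qed
  show "a \<otimes>\<^bsub>GU m T\<^esub> b \<in> K" if ab: "a \<in> K" "b \<in> K" for a b
    unfolding GU_simps using bspec[OF bspec[OF K(3) ab(1)] ab(2)] .
qed

lemma sub_dvd: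
  assumes G: "group G" and "subgroup K1 G" "subgroup K2 G" "K1 \<subseteq> K2"
  shows "card K1 dvd card K2"
proof -
  have g2: "group (G\<lparr>carrier := K2\<rparr>)" using subgroup.subgroup_is_group[OF assms(3) G] .
  have s12: "subgroup K1 (G\<lparr>carrier := K2\<rparr>)" using group.subgroup_incl[OF G assms(2-4)] .
  have eq: "card (rcosets\<^bsub>G\<lparr>carrier := K2\<rparr>\<^esub> K1) * card K1 = order (G\<lparr>carrier := K2\<rparr>)"
    using group.lagrange[OF g2 s12] .
  have o: "order (G\<lparr>carrier := K2\<rparr>) = card K2" unfolding order_def by simp
  have "card K1 dvd card (rcosets\<^bsub>G\<lparr>carrier := K2\<rparr>\<^esub> K1) * card K1" by (rule dvd_triv_right)
  then show ?thesis unfolding eq o .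
qed

lemma sub_dvd_order:
  assumes G: "group G" and "subgroup K G" shows "card K dvd order G"
proof -
  have "card K dvd card (rcosets\<^bsub>G\<^esub> K) * card K" by (rule dvd_triv_right)
  then show ?thesis unfolding group.lagrange[OF G assms(2)] .
qed


lemma omega_dvd:
  fixes a b :: nat assumes "a dvd b" "b \<noteq> 0"
  shows "size (prime_factorization a) \<le> size (prime_factorization b)"
proof -
  obtain q where q: "b = a * q" using assms by (auto elim: dvdE)
  then have "a \<noteq> 0" "q \<noteq> 0" using assms by auto
  then have "prime_factorization b = prime_factorization a + prime_factorization q"
    using q by (simp add: prime_factorization_mult)
  then show ?thesis by simp
qed

lemma omega_strict:
  fixes a b :: nat assumes "a dvd b" "a < b" "0 < a"
  shows "size (prime_factorization a) < size (prime_factorization b)"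
proof -
  obtain q where q: "b = a * q" using assms by (auto elim: dvdE)
  then have q0: "q \<noteq> 0" "q \<noteq> 1" using assms by auto
  then have "prime_factorization b = prime_factorization a + prime_factorization q"
    using q assms by (simp add: prime_factorization_mult)
  moreover have "prime_factorization q \<noteq> {#}" using q0 by (simp add: prime_factorization_empty_iff)
  ultimately show ?thesis by (simp add: nonempty_has_size)
qed

lemma omega_pow:
  fixes m :: nat assumes "m \<noteq> 0"
  shows "size (prime_factorization (m ^ K)) = K * size (prime_factorization m)"
proof (induction K)
  case 0 then show ?case by simp
next
  case (Suc K)
  have "prime_factorization (m ^ Suc K) = prime_factorization m + prime_factorization (m ^ K)"
    using assms by (simp add: prime_factorization_mult)
  then show ?case using Suc by simp
qed

lemma omega_chain:
  fixes c :: "nat \<Rightarrow> nat"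
  assumes "\<forall>i<k. c i dvd c (Suc i) \<and> c i < c (Suc i)" "\<forall>i\<le>k. 0 < c i"
  shows "k \<le> size (prime_factorization (c k))"
  using assms
proof (induction k)
  case 0 then show ?case by simp
next
  case (Suc k)
  have a1: "\<forall>i<k. c i dvd c (Suc i) \<and> c i < c (Suc i)" using Suc.prems(1) by simp
  have a2: "\<forall>i\<le>k. 0 < c i" using Suc.prems(2) by simp
  have h1: "k \<le> size (prime_factorization (c k))" using Suc.IH[OF a1 a2] .
  have b1: "c k dvd c (Suc k) \<and> c k < c (Suc k)" using Suc.prems(1) by blast
  have b2: "0 < c k" using a2 by blast
  have h2: "size (prime_factorization (c k)) < size (prime_factorization (c (Suc k)))"
    using b1 b2 omega_strict by blast
  show ?case using h1 h2 by linarith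
qed


lemma inj_strict_image:
  assumes "inj_on f B" "A \<subset> B" shows "f ` A \<subset> f ` B"
proof -
  obtain b where b: "b \<in> B" "b \<notin> A" using assms(2) by blast
  have "f b \<notin> f ` A" using inj_on_image_mem_iff[OF assms(1) b(1)] assms(2) b by blast
  then show ?thesis using assms(2) b by blast
qed

theorem theorem4p13:
  fixes m n :: nat and E :: "nat set set"
  assumes "2 \<le> m" and "0 < n"
    and "uniform_hypergraph m n E"
    and "hg_connected n E"
    and "\<exists>C. path_cover n E C"
  shows "stab_index m n (adj_tensor m E) \<le> enat (m ^ (pc n E - 1)) \<and>
         stab_dim m n (adj_tensor m E) \<le> enat ((pc n E - 1) * cl m)"
proof -
  interpret HG m n E by unfold_locales (fact assms)+
  have mpos: "0 < m" using assms(1) by simp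
  obtain C0 where C0: "path_cover n E C0" "card C0 = pc n E"
  proof -
    have "\<exists>C. path_cover n E C \<and> card C = pc n E"
      unfolding pc_def by (rule LeastI_ex) (use assms(5) in blast)
    then show thesis using that by blast
  qed
  have "0 \<in> (\<Union>P\<in>C0. covered P)" using C0(1) assms(2) unfolding path_cover_def by simp
  then obtain P0 where P0: "P0 \<in> C0" "0 \<in> set (fst P0)" unfolding covered_def by blast
  define T where "T = Tset C0 P0"
  have finT: "finite T" and cardT: "card T \<le> pc n E - 1"
    using card_Tset[OF C0(1) P0(1)] C0(2) unfolding T_def by auto
  have Tn: "T \<subseteq> {..<n}" using Tset_sub[OF C0(1)] unfolding T_def .
  define \<psi> where "\<psi> = (\<lambda>d::nat\<Rightarrow>complex. \<lambda>v. if v \<in> T then d v else 1)"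
  have \<psi>U: "\<psi> d \<in> Uset m T" if g: "good1 d" for d
    unfolding Uset_def
  proof (intro CollectI conjI ballI allI impI)
    fix v assume v: "v \<in> T"
    then have "v < n" using Tn by auto
    then show "\<psi> d v ^ m = 1" using g v unfolding good1_def \<psi>_def by simp
  next
    fix v assume "v \<notin> T" then show "\<psi> d v = 1" unfolding \<psi>_def by simp
  qed
  have \<psi>inj: "\<forall>v<n. d v = d' v" if g: "good1 d" "good1 d'" and eq: "\<psi> d = \<psi> d'" for d d'
  proof -
    have "\<forall>v\<in>T. d v = d' v"
    proof
      fix v assume v: "v \<in> T"
      have "\<psi> d v = \<psi> d' v" using eq by simp
      then show "d v = d' v" using v unfolding \<psi>_def by simp
    qed
    then show ?thesis using good1_inj[OF C0(1) P0 g] unfolding T_def by blast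
  qed
  have cardU: "card (Uset m T) = m ^ card T" and finU: "finite (Uset m T)"
    using card_Uset[OF finT mpos] by auto
  have powdvd: "m ^ card T dvd m ^ (pc n E - 1)" using cardT by (rule le_imp_power_dvd)
  have powle: "m ^ card T \<le> m ^ (pc n E - 1)" using cardT mpos by (intro power_increasing) auto
  define S where "S = stab_diagonals m n (adj_tensor m E)"
  have gS: "good1 d" if "d \<in> S" for d using goodE_good1[OF stab_goodE] that unfolding S_def by blast
  have injS: "inj_on \<psi> S"
  proof (rule inj_onI)
    fix d d' assume d: "d \<in> S" "d' \<in> S" "\<psi> d = \<psi> d'"
    have lo: "\<forall>v<n. d v = d' v" using \<psi>inj[OF gS[OF d(1)] gS[OF d(2)] d(3)] .
    have hi: "\<forall>v. n \<le> v \<longrightarrow> d v = 1 \<and> d' v = 1" using d(1,2) unfolding S_def stab_diagonals_def by auto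
    show "d = d'"
    proof
      fix v show "d v = d' v" using lo hi by (cases "v < n") auto
    qed
  qed
  have imS: "\<psi> ` S \<subseteq> Uset m T" using \<psi>U gS by blast
  have finS: "finite S" by (rule inj_on_finite[OF injS imS finU])
  have cardS: "card S \<le> m ^ card T" using card_inj_on_le[OF injS imS finU] cardU by simp
  have part1: "stab_index m n (adj_tensor m E) \<le> enat (m ^ (pc n E - 1))"
    using finS cardS powle unfolding stab_index_def S_def[symmetric] by simp
  obtain p :: "nat \<Rightarrow> real" and r :: real where pr: "\<forall>i<n. 0 < p i" "\<forall>i. n \<le> i \<longrightarrow> p i = 0" "p 0 = 1" "0 \<le> r"
     "\<forall>i<n. (\<Sum>e\<in>{e\<in>E. i \<in> e}. \<Prod>j\<in>e-{i}. p j) = r * p i ^ (m-1)"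
    by (rule PF_exists)
  interpret HGP m n E p r by unfold_locales (fact assms pr)+
  define \<Phi> where "\<Phi> = (\<lambda>y. \<psi> (dy y))"
  have rg: "good1 (dy y)" if "y \<in> rho_eigvecs m n AT" for y
    using goodE_good1[OF rho_goodE[OF that]] .
  have \<Phi>inj: "inj_on \<Phi> (rho_eigvecs m n AT)"
  proof (rule inj_onI)
    fix y y' assume y: "y \<in> rho_eigvecs m n AT" "y' \<in> rho_eigvecs m n AT" "\<Phi> y = \<Phi> y'"
    have lo: "\<forall>v<n. dy y v = dy y' v" using \<psi>inj[OF rg[OF y(1)] rg[OF y(2)]] y(3) unfolding \<Phi>_def by blast
    have "form (dy y) = form (dy y')" unfolding form_def using lo by auto
    then show "y = y'" using rho_form[OF y(1)] rho_form[OF y(2)] by simp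
  qed
  have \<Phi>one: "\<Phi> pcx = (\<lambda>v. 1)"
  proof
    fix v show "\<Phi> pcx v = 1"
    proof (cases "v \<in> T")
      case True
      then have "v < n" using Tn by auto
      then have "dy pcx v = 1" using dy_form[of v "\<lambda>_. 1"] pcx_form by simp
      then show ?thesis using True unfolding \<Phi>_def \<psi>_def by simp
    qed (simp add: \<Phi>_def \<psi>_def)
  qed
  have \<Phi>mult: "\<Phi> (eig_op m n AT y y') = (\<lambda>v. \<Phi> y v * \<Phi> y' v)"
    if y: "y \<in> rho_eigvecs m n AT" "y' \<in> rho_eigvecs m n AT" for y y'
  proof -
    have "eig_op m n AT y y' = eig_op m n AT (form (dy y)) (form (dy y'))"
      using rho_form[OF y(1)] rho_form[OF y(2)] by simp
    also have "\<dots> = form (\<lambda>i. dy y i * dy y' i)"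
      by (rule eig_op_form) (use rho_decomp(2)[OF y(1)] rho_decomp(2)[OF y(2)] in auto)
    finally have e: "eig_op m n AT y y' = form (\<lambda>i. dy y i * dy y' i)" .
    show ?thesis
    proof
      fix v show "\<Phi> (eig_op m n AT y y') v = \<Phi> y v * \<Phi> y' v"
      proof (cases "v \<in> T")
        case True
        then have "v < n" using Tn by auto
        then show ?thesis using True unfolding e \<Phi>_def \<psi>_def by (simp add: dy_form)
      qed (simp add: \<Phi>_def \<psi>_def)
    qed
  qed
  have \<Phi>pow: "\<Phi> (((\<lambda>z. eig_op m n AT y z) ^^ (m-1)) pcx) = (\<lambda>v. \<Phi> y v ^ (m-1))"
    if y: "y \<in> rho_eigvecs m n AT" for y
  proof -
    have "((\<lambda>z. eig_op m n AT y z) ^^ (m-1)) pcx = ((\<lambda>z. eig_op m n AT (form (dy y)) z) ^^ (m-1)) pcx"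
      using rho_form[OF y] by simp
    also have "\<dots> = form (\<lambda>i. dy y i ^ (m-1))"
      by (rule iter_form) (use rho_decomp(2)[OF y] in auto)
    finally have e: "((\<lambda>z. eig_op m n AT y z) ^^ (m-1)) pcx = form (\<lambda>i. dy y i ^ (m-1))" .
    show ?thesis
    proof
      fix v show "\<Phi> (((\<lambda>z. eig_op m n AT y z) ^^ (m-1)) pcx) v = \<Phi> y v ^ (m-1)"
      proof (cases "v \<in> T")
        case True
        then have "v < n" using Tn by auto
        then show ?thesis using True unfolding e \<Phi>_def \<psi>_def by (simp add: dy_form)
      qed (simp add: \<Phi>_def \<psi>_def)
    qed
  qed
  have part2: "stab_dim m n AT \<le> enat ((pc n E - 1) * cl m)"
    unfolding stab_dim_def
  proof (rule Sup_least)
    fix x assume "x \<in> {enat k |k. \<exists>Hs. length Hs = k + 1 \<and> (\<forall>H\<in>set Hs. eig_submodule m n AT H) \<and>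
                         (\<forall>i<k. Hs ! i \<subset> Hs ! (i + 1))}"
    then obtain k Hs where x: "x = enat k" and Hs: "length Hs = k + 1"
      "\<forall>H\<in>set Hs. eig_submodule m n AT H" "\<forall>i<k. Hs ! i \<subset> Hs ! (i + 1)" by blast
    have sm: "eig_submodule m n AT (Hs ! i)" if "i \<le> k" for i
      using Hs(1,2) that by (simp add: nth_mem)
    have Hrho: "Hs ! i \<subseteq> rho_eigvecs m n AT" if "i \<le> k" for i
      using sm[OF that] unfolding eig_submodule_def by blast
    define K where "K i = \<Phi> ` (Hs ! i)" for i
    have KU: "K i \<subseteq> Uset m T" if "i \<le> k" for i
      unfolding K_def \<Phi>_def using Hrho[OF that] \<psi>U rg by blast
    have Kone: "(\<lambda>v. 1) \<in> K i" if "i \<le> k" for i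
    proof -
      have "pcx \<in> Hs ! i" using sm[OF that] pos_eq unfolding eig_submodule_def by simp
      then show ?thesis unfolding K_def using \<Phi>one by (metis image_eqI)
    qed
    have subg: "subgroup (K i) (GU m T)" if i: "i \<le> k" for i
    proof (rule GU_subgroup[OF mpos KU[OF i] Kone[OF i]])
      have clo: "\<forall>y\<in>Hs!i. \<forall>y'\<in>Hs!i. eig_op m n AT y y' \<in> Hs!i"
        and pw: "\<forall>y\<in>Hs!i. \<forall>k::nat. ((\<lambda>z. eig_op m n AT y z) ^^ k) pcx \<in> Hs!i"
        using sm[OF i] pos_eq unfolding eig_submodule_def by auto
      show "\<forall>f\<in>K i. \<forall>g\<in>K i. (\<lambda>v. f v * g v) \<in> K i"
      proof (intro ballI)
        fix f g assume "f \<in> K i" "g \<in> K i"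
        then obtain y y' where yy: "y \<in> Hs!i" "y' \<in> Hs!i" "f = \<Phi> y" "g = \<Phi> y'"
          unfolding K_def by blast
        have "(\<lambda>v. f v * g v) = \<Phi> (eig_op m n AT y y')"
          using \<Phi>mult[OF subsetD[OF Hrho[OF i] yy(1)] subsetD[OF Hrho[OF i] yy(2)]] yy by simp
        moreover have "eig_op m n AT y y' \<in> Hs!i" using clo yy by blast
        ultimately show "(\<lambda>v. f v * g v) \<in> K i" unfolding K_def by simp
      qed
      show "\<forall>f\<in>K i. (\<lambda>v. f v ^ (m-1)) \<in> K i"
      proof
        fix f assume "f \<in> K i"
        then obtain y where yy: "y \<in> Hs!i" "f = \<Phi> y" unfolding K_def by blast
        have "(\<lambda>v. f v ^ (m-1)) = \<Phi> (((\<lambda>z. eig_op m n AT y z) ^^ (m-1)) pcx)"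
          using \<Phi>pow[OF subsetD[OF Hrho[OF i] yy(1)]] yy by simp
        moreover have "((\<lambda>z. eig_op m n AT y z) ^^ (m-1)) pcx \<in> Hs!i" using pw yy by blast
        ultimately show "(\<lambda>v. f v ^ (m-1)) \<in> K i" unfolding K_def by simp
      qed
    qed
    have finK: "finite (K i)" if "i \<le> k" for i using KU[OF that] finU finite_subset by blast
    define c where "c i = card (K i)" for i
    have chain: "\<forall>i<k. c i dvd c (Suc i) \<and> c i < c (Suc i)"
    proof (intro allI impI conjI)
      fix i assume i: "i < k"
      have st: "K i \<subset> K (Suc i)" unfolding K_def
        using inj_strict_image[OF inj_on_subset[OF \<Phi>inj Hrho[of "Suc i"]]] Hs(3) i by simp
      show "c i dvd c (Suc i)" unfolding c_def
        using sub_dvd[OF GU_group[OF mpos] subg subg] st i by simp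
      show "c i < c (Suc i)" unfolding c_def using psubset_card_mono[OF finK st] i by simp
    qed
    have cpos: "\<forall>i\<le>k. 0 < c i"
    proof (intro allI impI)
      fix i assume "i \<le> k"
      then show "0 < c i" unfolding c_def using finK Kone card_gt_0_iff by blast
    qed
    have k1: "k \<le> size (prime_factorization (c k))" by (rule omega_chain[OF chain cpos])
    have "c k dvd order (GU m T)" unfolding c_def by (rule sub_dvd_order[OF GU_group[OF mpos] subg]) simp
    then have "c k dvd m ^ card T" using cardU unfolding order_def GU_simps by simp
    then have "c k dvd m ^ (pc n E - 1)" using powdvd by (rule dvd_trans)
    then have "size (prime_factorization (c k)) \<le> size (prime_factorization (m ^ (pc n E - 1)))"
      using mpos by (intro omega_dvd) auto
    also have "\<dots> = (pc n E - 1) * cl m" unfolding cl_def using mpos by (intro omega_pow) simp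
    finally show "x \<le> enat ((pc n E - 1) * cl m)" using k1 x by simp
  qed
  show ?thesis using part1 part2 by simp
qed


end
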